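(* Consider the signals $u_{MPC}$, $\hat u_{MPC}$, $\alpha_{MPC}$ defined in the context along a trajectory of the closed-loop system. Then for every sampling time $t=\Delta^j$, $j\in\mathbb{N}$, $\hat u_{MPC}(\Delta^j)=\hat u^*(\hat P^{fcst}_j,f(\Delta^j),\omega(\Delta^j),\alpha_{MPC}(\Delta^j))$ is a (globally) Lipschitz function of the sampled state $(f(\Delta^j),\omega(\Delta^j),\alpha_{MPC}(\Delta^j))$ (together with the forecast $\hat P^{fcst}_j$). Additionally, $\alpha_{MPC,i}(t)\hat u_{MPC,i}(t)\leqslant\epsilon_i\alpha_{MPC,i}^2(t)$ for all $t\geqslant0$ and all $i\in\mathcal{I}$.
   Context: Setting: $\mathcal{G}=(\mathcal{I},\mathcal{E})$ is a connected undirected graph with $\mathcal{I}=\{1,\dots,n\}$, $\mathcal{E}=\{e_1,\dots,e_m\}$, fixed orientation and incidence matrix $D\in\mathbb{R}^{m\times n}$; $M=\mathrm{diag}(M_i)$, $E=\mathrm{diag}(E_i)$ with $M_i,E_i>0$; $Y_b\in\mathbb{R}^{m\times m}$ diagonal with positive entries; $\mathcal{I}_\omega\subseteq\mathcal{I}_u\subseteq\mathcal{I}$; $\mathbb{A}=\{y\in\mathbb{R}^n: y_w=0\ \forall w\notin\mathcal{I}_u\}$. The network dynamics are $\dot f=Y_bD\omega$, $M\dot\omega=-E\omega-D^Tf+p(t)+\alpha(t)$ with $\alpha(t)\in\mathbb{A}$. Parameters: $T,\tilde t>0$, $N=\lceil\tilde t/T\rceil$, $c_i,\epsilon_i,T_i>0$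 ($i\in\mathcal{I}_u$), $d>0$, $\underline\omega_i<\bar\omega_i$ ($i\in\mathcal{I}_\omega$). For $\hat P=[\hat p(0),\dots,\hat p(N-1)]\in\mathbb{R}^{n\times N}$, $f_0\in\mathbb{R}^m$, $\omega_0\in\mathbb{R}^n$, $a_0\in\mathbb{A}$, let $\hat u^*(\hat P,f_0,\omega_0,a_0)$ denote the $\hat u$-component of the (unique) optimal solution of the problem: minimize $\sum_{i\in\mathcal{I}_u}c_i\hat u_i^2+d\beta^2$ over $\hat f(k)\in\mathbb{R}^m,\hat\omega(k),\hat\alpha(k)\in\mathbb{R}^n$ ($k=0..N$), $\hat u\in\mathbb{R}^n$, $\beta\in\mathbb{R}$, subject to, for $k=0,\dots,N-1$: $\hat f(k+1)=\hat f(k)+TY_bD\hat\omega(k)$; $M\hat\omega(k+1)=M\hat\omega(k)+T(-E\hat\omega(k)-D^T\hat f(k)+\hat p(k)+\hat u)$; $\hat\alpha_i(k+1)=\hat\alpha_i(k)+T(-\hat\alpha_i(k)/T_i-\hat\omega_i(k)+\hat u_i)$ for $i\in\mathcal{I}_u$; $\hat\alpha_i\equiv0$ for $i\notin\mathcal{I}_u$; $\hat u\in\mathbb{A}$; $\hat f(0)=f_0,\hat\omega(0)=\omega_0,\hat\alpha(0)=a_0$; $\underline\omega_i-\beta\leqslant\hat\omega_i(k+1)\leqslant\bar\omega_i+\beta$ for $i\in\mathcal{I}_\omega$; $|\hat u_i|\leqslant\epsilon_i|a_{0,i}|$ for $i\in\mathcal{I}_u$. Sampling times $0=\Delta^0<\Delta^1<\cdots$;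 at each $\Delta^j$ a piece-wise continuous forecast $p^{fcst}_{\Delta^j}:[\Delta^j,\Delta^j+\tilde t]\to\mathbb{R}^n$ is given and $\hat P^{fcst}_j=[p^{fcst}_{\Delta^j}(\Delta^j+kT)]_{k=0}^{N-1}$. The MPC output is $u_{MPC}(t)=\hat u^*(\hat P^{fcst}_j,f(\Delta^j),\omega(\Delta^j),\alpha_{MPC}(\Delta^j))$ for $t\in[\Delta^j,\Delta^{j+1})$. The stability filter is $\hat u_{MPC,i}(t)=\mathrm{sat}(u_{MPC,i}(t);\epsilon_i|\alpha_{MPC,i}(t)|,-\epsilon_i|\alpha_{MPC,i}(t)|)$, where $\mathrm{sat}(a;b,-b)=\max\{-b,\min\{b,a\}\}$ for $b\geqslant 0$ (with $\epsilon_i$ taken as any positive value, e.g. $1$, for $i\notin\mathcal{I}_u$, where all quantities vanish). The low-pass filter is $\dot\alpha_{MPC,i}=-\alpha_{MPC,i}/T_i-\omega_i+\hat u_{MPC,i}$ for $i\in\mathcal{I}_u$ and $\alpha_{MPC,i}\equiv0$ for $i\notin\mathcal{I}_u$. *)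

theory Defs
  imports "HOL-Analysis.Analysis"
begin

text \<open>Nodes are indexed by a finite type 'n (so n = CARD('n)), edges by a finite type 'm.\<close>

record ('n, 'm) grid =
  Dinc :: "real^'n^'m"
  Mv   :: "real^'n"         \<comment> \<open>diagonal of M\<close>
  Ev   :: "real^'n"         \<comment> \<open>diagonal of E\<close>
  Ybv  :: "real^'m"         \<comment> \<open>diagonal of Y_b\<close>
  Iu   :: "'n set"
  Iw   :: "'n set"

record 'n mpcpar =
  Tstep :: real
  ttil  :: real
  Tf    :: "'n \<Rightarrow> real"
  epsv  :: "'n \<Rightarrow> real"
  cw    :: "'n \<Rightarrow> real"
  dw    :: real
  wlo   :: "'n \<Rightarrow> real"
  whi   :: "'n \<Rightarrow> real"

definition diagm :: "real^'k \<Rightarrow> real^'k^'k" where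
  "diagm v = (\<chi> i j. if i = j then v $ i else 0)"

definition Nh :: "'n mpcpar \<Rightarrow> nat" where
  "Nh P = nat \<lceil>ttil P / Tstep P\<rceil>"

definition Aset :: "('n::finite, 'm::finite) grid \<Rightarrow> (real^'n) set" where
  "Aset G = {y. \<forall>w. w \<notin> Iu G \<longrightarrow> y $ w = 0}"

definition graph_adj :: "real^'n^'m \<Rightarrow> ('n \<times> 'n) set" where
  "graph_adj D = {(i, j). i \<noteq> j \<and> (\<exists>e. D $ e $ i \<noteq> 0 \<and> D $ e $ j \<noteq> 0)}"

definition is_conn_incidence :: "real^'n^'m \<Rightarrow> bool" where
  "is_conn_incidence D \<longleftrightarrow>
     (\<forall>e. \<exists>a b. a \<noteq> b \<and> D $ e $ a = 1 \<and> D $ e $ b = -1 \<and>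
              (\<forall>i. i \<noteq> a \<longrightarrow> i \<noteq> b \<longrightarrow> D $ e $ i = 0)) \<and>
     (\<forall>i j. (i, j) \<in> (graph_adj D)\<^sup>*)"

definition valid_grid :: "('n::finite, 'm::finite) grid \<Rightarrow> bool" where
  "valid_grid G \<longleftrightarrow> is_conn_incidence (Dinc G) \<and>
     (\<forall>i. Mv G $ i > 0) \<and> (\<forall>i. Ev G $ i > 0) \<and> (\<forall>e. Ybv G $ e > 0) \<and>
     Iw G \<subseteq> Iu G"

definition valid_par :: "('n::finite, 'm::finite) grid \<Rightarrow> 'n mpcpar \<Rightarrow> bool" where
  "valid_par G P \<longleftrightarrow> Tstep P > 0 \<and> ttil P > 0 \<and>
     (\<forall>i\<in>Iu G. cw P i > 0 \<and> epsv P i > 0 \<and> Tf P i > 0) \<and>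
     (\<forall>i. epsv P i > 0) \<and> dw P > 0 \<and> (\<forall>i\<in>Iw G. wlo P i < whi P i)"

text \<open>Feasible set of the MPC quadratic program (time indices k = 0..N).
  Phat k is the k-th column of the forecast matrix (k < N).\<close>
definition qp_feas ::
  "('n::finite, 'm::finite) grid \<Rightarrow> 'n mpcpar \<Rightarrow> (nat \<Rightarrow> real^'n) \<Rightarrow> real^'m \<Rightarrow> real^'n \<Rightarrow> real^'n
   \<Rightarrow> (nat \<Rightarrow> real^'m) \<Rightarrow> (nat \<Rightarrow> real^'n) \<Rightarrow> (nat \<Rightarrow> real^'n) \<Rightarrow> real^'n \<Rightarrow> real \<Rightarrow> bool" where
  "qp_feas G P Phat f0 w0 a0 fh wh ah u \<beta> \<longleftrightarrow>
     (\<forall>k < Nh P. fh (Suc k) = fh k + Tstep P *\<^sub>R ((diagm (Ybv G) ** Dinc G) *v wh k)) \<and>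
     (\<forall>k < Nh P. diagm (Mv G) *v wh (Suc k) = diagm (Mv G) *v wh k +
         Tstep P *\<^sub>R (- (diagm (Ev G) *v wh k) - (transpose (Dinc G) *v fh k) + Phat k + u)) \<and>
     (\<forall>k < Nh P. \<forall>i\<in>Iu G. ah (Suc k) $ i =
         ah k $ i + Tstep P * (- ah k $ i / Tf P i - wh k $ i + u $ i)) \<and>
     (\<forall>k \<le> Nh P. \<forall>i. i \<notin> Iu G \<longrightarrow> ah k $ i = 0) \<and>
     u \<in> Aset G \<and>
     fh 0 = f0 \<and> wh 0 = w0 \<and> ah 0 = a0 \<and>
     (\<forall>k < Nh P. \<forall>i\<in>Iw G. wlo P i - \<beta> \<le> wh (Suc k) $ i \<and> wh (Suc k) $ i \<le> whi P i + \<beta>) \<and>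
     (\<forall>i\<in>Iu G. \<bar>u $ i\<bar> \<le> epsv P i * \<bar>a0 $ i\<bar>)"

definition qp_cost :: "('n::finite, 'm::finite) grid \<Rightarrow> 'n mpcpar \<Rightarrow> real^'n \<Rightarrow> real \<Rightarrow> real" where
  "qp_cost G P u \<beta> = (\<Sum>i\<in>Iu G. cw P i * (u $ i)\<^sup>2) + dw P * \<beta>\<^sup>2"

definition qp_opt ::
  "('n::finite, 'm::finite) grid \<Rightarrow> 'n mpcpar \<Rightarrow> (nat \<Rightarrow> real^'n) \<Rightarrow> real^'m \<Rightarrow> real^'n \<Rightarrow> real^'n
   \<Rightarrow> (nat \<Rightarrow> real^'m) \<Rightarrow> (nat \<Rightarrow> real^'n) \<Rightarrow> (nat \<Rightarrow> real^'n) \<Rightarrow> real^'n \<Rightarrow> real \<Rightarrow> bool" where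
  "qp_opt G P Phat f0 w0 a0 fh wh ah u \<beta> \<longleftrightarrow>
     qp_feas G P Phat f0 w0 a0 fh wh ah u \<beta> \<and>
     (\<forall>fh' wh' ah' u' \<beta>'. qp_feas G P Phat f0 w0 a0 fh' wh' ah' u' \<beta>' \<longrightarrow>
        qp_cost G P u \<beta> \<le> qp_cost G P u' \<beta>')"

definition uopt ::
  "('n::finite, 'm::finite) grid \<Rightarrow> 'n mpcpar \<Rightarrow> (nat \<Rightarrow> real^'n) \<Rightarrow> real^'m \<Rightarrow> real^'n \<Rightarrow> real^'n \<Rightarrow> real^'n" where
  "uopt G P Phat f0 w0 a0 = (THE u. \<exists>fh wh ah \<beta>. qp_opt G P Phat f0 w0 a0 fh wh ah u \<beta>)"

definition sat :: "real \<Rightarrow> real \<Rightarrow> real" where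
  "sat a b = max (- b) (min b a)"

definition seg :: "(nat \<Rightarrow> real) \<Rightarrow> real \<Rightarrow> nat" where
  "seg \<Delta> t = (THE j. \<Delta> j \<le> t \<and> t < \<Delta> (Suc j))"

definition Pfcst :: "'n mpcpar \<Rightarrow> (nat \<Rightarrow> real) \<Rightarrow> (nat \<Rightarrow> real \<Rightarrow> real^'n) \<Rightarrow> nat \<Rightarrow> nat \<Rightarrow> real^'n" where
  "Pfcst P \<Delta> pf j = (\<lambda>k. pf j (\<Delta> j + real k * Tstep P))"

definition u_mpc ::
  "('n::finite, 'm::finite) grid \<Rightarrow> 'n mpcpar \<Rightarrow> (nat \<Rightarrow> real) \<Rightarrow> (nat \<Rightarrow> real \<Rightarrow> real^'n)
   \<Rightarrow> (real \<Rightarrow> real^'m) \<Rightarrow> (real \<Rightarrow> real^'n) \<Rightarrow> (real \<Rightarrow> real^'n) \<Rightarrow> real \<Rightarrow> real^'n" where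
  "u_mpc G P \<Delta> pf f \<omega> \<alpha> t =
     (let j = seg \<Delta> t in uopt G P (Pfcst P \<Delta> pf j) (f (\<Delta> j)) (\<omega> (\<Delta> j)) (\<alpha> (\<Delta> j)))"

definition uhat_mpc ::
  "('n::finite, 'm::finite) grid \<Rightarrow> 'n mpcpar \<Rightarrow> (nat \<Rightarrow> real) \<Rightarrow> (nat \<Rightarrow> real \<Rightarrow> real^'n)
   \<Rightarrow> (real \<Rightarrow> real^'m) \<Rightarrow> (real \<Rightarrow> real^'n) \<Rightarrow> (real \<Rightarrow> real^'n) \<Rightarrow> real \<Rightarrow> real^'n" where
  "uhat_mpc G P \<Delta> pf f \<omega> \<alpha> t =
     (\<chi> i. sat (u_mpc G P \<Delta> pf f \<omega> \<alpha> t $ i) (epsv P i * \<bar>\<alpha> t $ i\<bar>))"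

text \<open>Closed-loop trajectory: network dynamics driven by alpha = alpha_MPC, low-pass filter
  driven by the stability-filtered MPC output.\<close>
definition closed_loop ::
  "('n::finite, 'm::finite) grid \<Rightarrow> 'n mpcpar \<Rightarrow> (nat \<Rightarrow> real) \<Rightarrow> (nat \<Rightarrow> real \<Rightarrow> real^'n)
   \<Rightarrow> (real \<Rightarrow> real^'n) \<Rightarrow> (real \<Rightarrow> real^'m) \<Rightarrow> (real \<Rightarrow> real^'n) \<Rightarrow> (real \<Rightarrow> real^'n) \<Rightarrow> bool" where
  "closed_loop G P \<Delta> pf p f \<omega> \<alpha> \<longleftrightarrow>
     continuous_on {0..} f \<and> continuous_on {0..} \<omega> \<and> continuous_on {0..} \<alpha> \<and>
     (\<forall>t\<ge>0. \<alpha> t \<in> Aset G) \<and>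
     (\<forall>t>0. t \<notin> range \<Delta> \<longrightarrow>
        (f has_vector_derivative ((diagm (Ybv G) ** Dinc G) *v \<omega> t)) (at t) \<and>
        (\<exists>w'. (\<omega> has_vector_derivative w') (at t) \<and>
              diagm (Mv G) *v w' = - (diagm (Ev G) *v \<omega> t) - (transpose (Dinc G) *v f t) + p t + \<alpha> t) \<and>
        (\<forall>i\<in>Iu G. ((\<lambda>s. \<alpha> s $ i) has_real_derivative
            (- \<alpha> t $ i / Tf P i - \<omega> t $ i + uhat_mpc G P \<Delta> pf f \<omega> \<alpha> t $ i)) (at t)))"

end

theory Submission
  imports Defs
begin


lemma linear_halfspace_convex:
  assumes "linear f" shows "convex {z. f z \<le> (c::real)}"
  using assms unfolding convex_def
  by (auto simp: linear_add linear_scale intro!: convex_bound_le)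

lemma linear_hyperplane_convex:
  assumes "linear f" shows "convex {z. f z = (c::real)}"
  using assms unfolding convex_def
  by (auto simp: linear_add linear_scale distrib_right[symmetric])

locale polyproj =
  fixes J :: "'j set" and g :: "'j \<Rightarrow> 'a::euclidean_space \<Rightarrow> real"
  assumes finJ: "finite J" and lin: "\<And>j. j \<in> J \<Longrightarrow> linear (g j)"
begin

definition PS where "PS b = {z. \<forall>j\<in>J. g j z \<le> b j}"
definition xb where "xb b = closest_point (PS b) 0"
definition VS where "VS E b = {z. \<forall>j\<in>E. g j z = b j}"
definition pE where "pE E b = closest_point (VS E b) 0"

lemma contg: "j \<in> J \<Longrightarrow> continuous_on S (g j)"
  using lin linear_continuous_on linear_conv_bounded_linear by blast

lemma PS_eq: "PS b = (\<Inter>j\<in>J. {z. g j z \<le> b j})"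
  unfolding PS_def by auto

lemma closed_PS: "closed (PS b)"
  unfolding PS_eq
  by (intro closed_INT ballI closed_Collect_le[OF contg continuous_on_const])

lemma convex_PS: "convex (PS b)"
  unfolding PS_eq by (intro convex_INT linear_halfspace_convex lin) auto

lemma VS_eq: "E \<subseteq> J \<Longrightarrow> VS E b = (\<Inter>j\<in>E. {z. g j z = b j})"
  unfolding VS_def by auto

lemma closed_VS: "E \<subseteq> J \<Longrightarrow> closed (VS E b)"
  unfolding VS_eq
  using closed_Collect_eq[OF contg continuous_on_const] by (intro closed_INT ballI) auto

lemma convex_VS: "E \<subseteq> J \<Longrightarrow> convex (VS E b)"
  unfolding VS_eq by (intro convex_INT linear_hyperplane_convex lin) auto

lemma xb_in: "PS b \<noteq> {} \<Longrightarrow> xb b \<in> PS b"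
  unfolding xb_def using closest_point_in_set closed_PS by blast

lemma xb_dot: "y \<in> PS b \<Longrightarrow> inner (xb b) (y - xb b) \<ge> 0"
  using closest_point_dot[OF convex_PS closed_PS, of y b 0] unfolding xb_def by simp

lemma xb_le: "y \<in> PS b \<Longrightarrow> norm (xb b) \<le> norm y"
  using closest_point_le[OF closed_PS, of y b 0] unfolding xb_def by simp

lemma xb_unique: "y \<in> PS b \<Longrightarrow> norm y \<le> norm (xb b) \<Longrightarrow> y = xb b"
  unfolding xb_def
  apply (rule closest_point_unique[OF convex_PS closed_PS])
  using xb_le unfolding xb_def by (auto simp: dist_norm intro: order_trans)

lemma pE_in: "E \<subseteq> J \<Longrightarrow> VS E b \<noteq> {} \<Longrightarrow> pE E b \<in> VS E b"
  unfolding pE_def using closest_point_in_set closed_VS by blast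

lemma pE_dot: "E \<subseteq> J \<Longrightarrow> y \<in> VS E b \<Longrightarrow> inner (pE E b) (y - pE E b) \<ge> 0"
  using closest_point_dot[OF convex_VS closed_VS, of E y b 0] unfolding pE_def by simp

lemma pE_orth:
  assumes E: "E \<subseteq> J" and ne: "VS E b \<noteq> {}" and v: "\<forall>j\<in>E. g j v = 0"
  shows "inner (pE E b) v = 0"
proof -
  let ?x = "pE E b"
  have x: "?x \<in> VS E b" using pE_in[OF E ne] .
  have lv: "\<And>j c. j \<in> E \<Longrightarrow> g j (?x + c *\<^sub>R v) = g j ?x"
    using E lin v by (auto simp: linear_add linear_scale)
  have "?x + v \<in> VS E b" "?x + (-1) *\<^sub>R v \<in> VS E b"
    using x lv[of _ 1] lv[of _ "-1"] unfolding VS_def by auto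
  from pE_dot[OF E this(1)] pE_dot[OF E this(2)] show ?thesis by simp
qed

lemma sigma_ex:
  assumes E: "E \<subseteq> J"
  shows "\<exists>\<sigma>>0. \<forall>y. (\<forall>v. (\<forall>j\<in>E. g j v = 0) \<longrightarrow> inner y v = 0) \<longrightarrow> \<sigma> * norm y \<le> (\<Sum>j\<in>E. \<bar>g j y\<bar>)"
proof -
  define U where "U = {y. \<forall>v. (\<forall>j\<in>E. g j v = 0) \<longrightarrow> inner y v = 0}"
  have clU: "closed U"
  proof -
    have "U = (\<Inter>v\<in>{v. \<forall>j\<in>E. g j v = 0}. {y. inner y v = 0})" unfolding U_def by auto
    then show ?thesis by (auto intro!: closed_INT closed_Collect_eq continuous_intros)
  qed
  define S where "S = U \<inter> sphere 0 1"
  have cS: "compact S" unfolding S_def using clU compact_sphere by blast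
  define h where "h y = (\<Sum>j\<in>E. \<bar>g j y\<bar>)" for y
  have ch: "continuous_on S h"
    unfolding h_def using E by (intro continuous_on_sum continuous_on_rabs contg) auto
  have hom: "h (c *\<^sub>R y) = \<bar>c\<bar> * h y" for c y
    unfolding h_def using E lin by (auto simp: linear_scale abs_mult sum_distrib_left intro!: sum.cong)
  show ?thesis
  proof (cases "S = {}")
    case True
    have "y = 0" if "y \<in> U" for y
    proof (rule ccontr)
      assume "y \<noteq> 0"
      have "(1/norm y) *\<^sub>R y \<in> U" using that unfolding U_def by auto
      moreover have "(1/norm y) *\<^sub>R y \<in> sphere 0 1" using \<open>y \<noteq> 0\<close> by simp
      ultimately show False using True S_def by blast
    qed
    show ?thesis
    proof (intro exI[of _ 1] conjI allI impI)
      fix y assume "\<forall>v. (\<forall>j\<in>E. g j v = 0) \<longrightarrow> inner y v = 0"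
      then have "y = 0" using \<open>\<And>y. y \<in> U \<Longrightarrow> y = 0\<close> unfolding U_def by blast
      then show "1 * norm y \<le> (\<Sum>j\<in>E. \<bar>g j y\<bar>)" by (simp add: sum_nonneg)
    qed simp
  next
    case False
    obtain y0 where y0: "y0 \<in> S" and mn: "\<forall>y\<in>S. h y0 \<le> h y"
      using continuous_attains_inf[OF cS False ch] by blast
    have pos: "h y0 > 0"
    proof (rule ccontr)
      assume "\<not> h y0 > 0"
      then have "h y0 = 0" unfolding h_def by (simp add: sum_nonneg not_less eq_iff)
      then have "\<forall>j\<in>E. g j y0 = 0" unfolding h_def using finite_subset[OF E finJ]
        by (simp add: sum_nonneg_eq_0_iff)
      then have "inner y0 y0 = 0" using y0 unfolding S_def U_def by blast
      then show False using y0 unfolding S_def by simp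
    qed
    show ?thesis
    proof (intro exI[of _ "h y0"] conjI pos allI impI)
      fix y assume yU: "\<forall>v. (\<forall>j\<in>E. g j v = 0) \<longrightarrow> inner y v = 0"
      show "h y0 * norm y \<le> (\<Sum>j\<in>E. \<bar>g j y\<bar>)"
      proof (cases "y = 0")
        case True then show ?thesis using E lin by (simp add: linear_0)
      next
        case False
        have "(1/norm y) *\<^sub>R y \<in> S" using yU False unfolding S_def U_def by auto
        then have "h y0 \<le> h ((1/norm y) *\<^sub>R y)" using mn by blast
        also have "\<dots> = h y / norm y" by (simp add: hom)
        finally show ?thesis using False by (simp add: h_def field_simps)
      qed
    qed
  qed
qed

definition sig where
  "sig E = (SOME \<sigma>. \<sigma> > 0 \<and> (\<forall>y. (\<forall>v. (\<forall>j\<in>E. g j v = 0) \<longrightarrow> inner y v = 0) \<longrightarrow> \<sigma> * norm y \<le> (\<Sum>j\<in>E. \<bar>g j y\<bar>)))"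

lemma sig: "E \<subseteq> J \<Longrightarrow> sig E > 0 \<and> (\<forall>y. (\<forall>v. (\<forall>j\<in>E. g j v = 0) \<longrightarrow> inner y v = 0) \<longrightarrow> sig E * norm y \<le> (\<Sum>j\<in>E. \<bar>g j y\<bar>))"
  unfolding sig_def using sigma_ex[of E] by (rule someI_ex) (auto)

definition Lc where "Lc = (\<Sum>E\<in>Pow J. 1 / sig E)"

lemma Lc_ge: "E \<subseteq> J \<Longrightarrow> 1 / sig E \<le> Lc"
  unfolding Lc_def using finJ sig by (intro member_le_sum) (auto simp: less_imp_le)

lemma Lc_nonneg: "Lc \<ge> 0"
  using Lc_ge[of "{}"] sig[of "{}"] by (smt (verit) empty_subsetI divide_pos_pos zero_less_one)

lemma pE_lip:
  assumes E: "E \<subseteq> J" and ne: "VS E b \<noteq> {}" "VS E b' \<noteq> {}"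
  shows "norm (pE E b - pE E b') \<le> Lc * (\<Sum>j\<in>J. \<bar>b j - b' j\<bar>)"
proof -
  let ?y = "pE E b - pE E b'"
  have orth: "\<forall>v. (\<forall>j\<in>E. g j v = 0) \<longrightarrow> inner ?y v = 0"
    using pE_orth[OF E ne(1)] pE_orth[OF E ne(2)] by (simp add: inner_diff_left)
  have gy: "g j ?y = b j - b' j" if "j \<in> E" for j
    using pE_in[OF E ne(1)] pE_in[OF E ne(2)] that E lin[of j] by (auto simp: VS_def linear_diff)
  have s: "sig E > 0" "sig E * norm ?y \<le> (\<Sum>j\<in>E. \<bar>g j ?y\<bar>)" using sig[OF E] orth by auto
  have "(\<Sum>j\<in>E. \<bar>g j ?y\<bar>) = (\<Sum>j\<in>E. \<bar>b j - b' j\<bar>)" using gy by simp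
  also have "\<dots> \<le> (\<Sum>j\<in>J. \<bar>b j - b' j\<bar>)" using E finJ by (intro sum_mono2) auto
  finally have "norm ?y \<le> (1 / sig E) * (\<Sum>j\<in>J. \<bar>b j - b' j\<bar>)"
    using s by (simp add: field_simps)
  also have "\<dots> \<le> Lc * (\<Sum>j\<in>J. \<bar>b j - b' j\<bar>)"
    using Lc_ge[OF E] by (intro mult_right_mono) (auto simp: sum_nonneg)
  finally show ?thesis .
qed

definition act where "act b = {j\<in>J. g j (xb b) = b j}"

lemma act_sub: "act b \<subseteq> J" unfolding act_def by auto

lemma xb_pE:
  assumes ne: "PS b \<noteq> {}"
  shows "xb b = pE (act b) b"
proof -
  let ?x = "xb b" and ?E = "act b"
  have xP: "?x \<in> PS b" using xb_in[OF ne] .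
  have xV: "?x \<in> VS ?E b" unfolding VS_def act_def by auto
  have "norm ?x \<le> norm y" if yV: "y \<in> VS ?E b" for y
  proof -
    have "\<forall>j\<in>J - ?E. eventually (\<lambda>\<epsilon>. g j ?x + \<epsilon> * (g j y - g j ?x) < b j) (at_right (0::real))"
    proof
      fix j assume j: "j \<in> J - ?E"
      then have lt: "g j ?x < b j" using xP unfolding PS_def act_def by force
      have "((\<lambda>\<epsilon>. g j ?x + \<epsilon> * (g j y - g j ?x)) \<longlongrightarrow> g j ?x + 0 * (g j y - g j ?x)) (at_right (0::real))"
        by (intro tendsto_intros tendsto_ident_at)
      then show "eventually (\<lambda>\<epsilon>. g j ?x + \<epsilon> * (g j y - g j ?x) < b j) (at_right (0::real))"
        using lt by (intro order_tendstoD(2)) auto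
    qed
    then have "eventually (\<lambda>\<epsilon>. \<forall>j\<in>J - ?E. g j ?x + \<epsilon> * (g j y - g j ?x) < b j) (at_right (0::real))"
      using finJ by (subst eventually_ball_finite_distrib) auto
    moreover have "eventually (\<lambda>\<epsilon>. \<epsilon> > (0::real)) (at_right 0)" by (simp add: eventually_at_right_less)
    ultimately have "eventually (\<lambda>\<epsilon>. \<epsilon> > 0 \<and> (\<forall>j\<in>J - ?E. g j ?x + \<epsilon> * (g j y - g j ?x) < b j)) (at_right (0::real))"
      by (rule eventually_conj[rotated])
    then obtain \<epsilon> where e: "\<epsilon> > 0" "\<forall>j\<in>J - ?E. g j ?x + \<epsilon> * (g j y - g j ?x) < b j"
      using eventually_happens trivial_limit_at_right_real by (metis (lifting))
    define z where "z = ?x + \<epsilon> *\<^sub>R (y - ?x)"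
    have gz: "g j z = g j ?x + \<epsilon> * (g j y - g j ?x)" if "j \<in> J" for j
      using lin[OF that] by (simp add: z_def linear_add linear_scale linear_diff)
    have "z \<in> PS b"
      unfolding PS_def
    proof (intro CollectI ballI)
      fix j assume j: "j \<in> J"
      show "g j z \<le> b j"
      proof (cases "j \<in> ?E")
        case True
        then have "g j y = b j" "g j ?x = b j" using yV xV unfolding VS_def by auto
        then show ?thesis using gz[OF j] by simp
      next
        case False then show ?thesis using e(2) gz[OF j] j by force
      qed
    qed
    from xb_dot[OF this] have "\<epsilon> * inner ?x (y - ?x) \<ge> 0" by (simp add: z_def)
    then have ip: "inner ?x (y - ?x) \<ge> 0" using e(1) by (simp add: zero_le_mult_iff)
    have "inner y y = inner ?x ?x + 2 * inner ?x (y - ?x) + inner (y - ?x) (y - ?x)"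
      by (simp add: inner_diff_left inner_diff_right inner_commute algebra_simps)
    then have "inner ?x ?x \<le> inner y y" using ip by (smt (verit) inner_ge_zero)
    then show ?thesis by (simp add: norm_le)
  qed
  then show ?thesis unfolding pE_def
    by (intro closest_point_unique[OF convex_VS[OF act_sub] closed_VS[OF act_sub] xV]) (simp add: dist_norm)
qed

lemma PS_comb:
  assumes "z1 \<in> PS c1" "z2 \<in> PS c2" "0 \<le> \<mu>" "\<mu> \<le> 1"
  shows "(1-\<mu>) *\<^sub>R z1 + \<mu> *\<^sub>R z2 \<in> PS (\<lambda>j. (1-\<mu>) * c1 j + \<mu> * c2 j)"
  unfolding PS_def
proof (intro CollectI ballI)
  fix j assume j: "j \<in> J"
  have "g j z1 \<le> c1 j" "g j z2 \<le> c2 j" using assms j unfolding PS_def by auto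
  then have "(1-\<mu>) * g j z1 + \<mu> * g j z2 \<le> (1-\<mu>) * c1 j + \<mu> * c2 j"
    using assms by (intro add_mono mult_left_mono) auto
  then show "g j ((1-\<mu>) *\<^sub>R z1 + \<mu> *\<^sub>R z2) \<le> (1-\<mu>) * c1 j + \<mu> * c2 j"
    using lin[OF j] by (simp add: linear_add linear_scale)
qed

definition bt :: "('j \<Rightarrow> real) \<Rightarrow> ('j \<Rightarrow> real) \<Rightarrow> real \<Rightarrow> 'j \<Rightarrow> real" where "bt b0 b1 t = (\<lambda>j. (1-t) * b0 j + t * b1 j)"
definition Xs where "Xs b0 b1 t = xb (bt b0 b1 t)"

lemma bt_comb: "bt b0 b1 ((1-\<mu>)*t + \<mu>*e) = (\<lambda>j. (1-\<mu>) * bt b0 b1 t j + \<mu> * bt b0 b1 e j)"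
  unfolding bt_def by (rule ext) (simp add: algebra_simps)

lemma bt_0[simp]: "bt b0 b1 0 = b0"
  unfolding bt_def by auto
lemma bt_1[simp]: "bt b0 b1 1 = b1"
  unfolding bt_def by auto

lemma bt_diff: "(\<Sum>j\<in>J. \<bar>bt b0 b1 s j - bt b0 b1 t j\<bar>) = \<bar>s - t\<bar> * (\<Sum>j\<in>J. \<bar>b1 j - b0 j\<bar>)"
proof -
  have "bt b0 b1 s j - bt b0 b1 t j = (s - t) * (b1 j - b0 j)" for j
    unfolding bt_def by (simp add: algebra_simps)
  then show ?thesis by (simp add: abs_mult sum_distrib_left)
qed

lemma dot_ineq:
  assumes ne: "PS b \<noteq> {}" "PS b' \<noteq> {}" and y: "y \<in> PS b'" and y': "y' \<in> PS b"
  shows "(norm (xb b - xb b'))\<^sup>2 \<le> norm (xb b) * norm (y' - xb b') + norm (xb b') * norm (y - xb b)"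
proof -
  let ?x = "xb b" and ?x' = "xb b'"
  have d1: "inner ?x (y' - ?x) \<ge> 0" using xb_dot[OF y'] .
  have d2: "inner ?x' (y - ?x') \<ge> 0" using xb_dot[OF y] .
  have "(norm (?x - ?x'))\<^sup>2 = inner ?x (?x - y') + inner ?x (y' - ?x') + (inner ?x' (?x' - y) + inner ?x' (y - ?x))"
    by (simp add: power2_norm_eq_inner inner_diff_left inner_diff_right inner_commute algebra_simps)
  also have "\<dots> \<le> inner ?x (y' - ?x') + inner ?x' (y - ?x)"
    using d1 d2 by (simp add: inner_diff_right)
  also have "\<dots> \<le> norm ?x * norm (y' - ?x') + norm ?x' * norm (y - ?x)"
    by (intro add_mono norm_cauchy_schwarz)
  finally show ?thesis .
qed

context
  fixes b0 b1 :: "'j \<Rightarrow> real"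
  assumes ne0: "PS b0 \<noteq> {}" and ne1: "PS b1 \<noteq> {}"
begin

lemma bt_ne: "0 \<le> t \<Longrightarrow> t \<le> 1 \<Longrightarrow> (1-t) *\<^sub>R xb b0 + t *\<^sub>R xb b1 \<in> PS (bt b0 b1 t)"
  unfolding bt_def by (rule PS_comb[OF xb_in[OF ne0] xb_in[OF ne1]])

lemma bt_ne': "0 \<le> t \<Longrightarrow> t \<le> 1 \<Longrightarrow> PS (bt b0 b1 t) \<noteq> {}"
  using bt_ne by blast

definition "Rb = norm (xb b0) + norm (xb b1)"

lemma Xs_bound: "0 \<le> t \<Longrightarrow> t \<le> 1 \<Longrightarrow> norm (Xs b0 b1 t) \<le> Rb"
proof -
  assume t: "0 \<le> t" "t \<le> 1"
  have "norm (Xs b0 b1 t) \<le> norm ((1-t) *\<^sub>R xb b0 + t *\<^sub>R xb b1)"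
    unfolding Xs_def by (rule xb_le[OF bt_ne[OF t]])
  also have "\<dots> \<le> (1-t) * norm (xb b0) + t * norm (xb b1)"
    using t by (smt (verit) norm_scaleR norm_triangle_ineq abs_of_nonneg)
  also have "\<dots> \<le> Rb" unfolding Rb_def using t
    by (smt (verit) mult_left_le_one_le norm_ge_zero)
  finally show ?thesis .
qed

lemma Xs_comb:
  assumes "0 \<le> t" "t \<le> 1" "0 \<le> e" "e \<le> 1" "0 \<le> \<mu>" "\<mu> \<le> 1"
  shows "(1-\<mu>) *\<^sub>R Xs b0 b1 t + \<mu> *\<^sub>R Xs b0 b1 e \<in> PS (bt b0 b1 ((1-\<mu>)*t + \<mu>*e))"
  unfolding bt_comb Xs_def
  by (rule PS_comb[OF xb_in[OF bt_ne'] xb_in[OF bt_ne']]) (use assms in auto)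

lemma comb_dist: "norm ((1-\<mu>) *\<^sub>R a + \<mu> *\<^sub>R c - a) = \<bar>\<mu>\<bar> * norm (c - a)"
proof -
  have "(1-\<mu>) *\<^sub>R a + \<mu> *\<^sub>R c - a = \<mu> *\<^sub>R (c - a)" by (simp add: algebra_simps)
  then show ?thesis by simp
qed

lemma Xs_diff_bound: "0 \<le> t \<Longrightarrow> t \<le> 1 \<Longrightarrow> 0 \<le> s \<Longrightarrow> s \<le> 1 \<Longrightarrow> norm (Xs b0 b1 s - Xs b0 b1 t) \<le> 2 * Rb"
  using Xs_bound[of s] Xs_bound[of t] norm_triangle_ineq4[of "Xs b0 b1 s" "Xs b0 b1 t"] by linarith

lemma Rb_nonneg: "Rb \<ge> 0" unfolding Rb_def by simp

lemma key_ineq: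
  assumes t: "0 < t" "t < 1" and s: "0 < s" "s < 1" and st: "t \<le> s"
  shows "(norm (Xs b0 b1 s - Xs b0 b1 t))\<^sup>2 \<le> 2 * Rb\<^sup>2 * ((s - t) / (1 - t) + (s - t) / s)"
proof -
  let ?X = "Xs b0 b1"
  define \<mu> where "\<mu> = (s - t) / (1 - t)"
  define \<kappa> where "\<kappa> = (s - t) / s"
  have \<mu>: "0 \<le> \<mu>" "\<mu> \<le> 1" using t s st by (auto simp: \<mu>_def field_simps)
  have \<kappa>: "0 \<le> \<kappa>" "\<kappa> \<le> 1" using t s st by (auto simp: \<kappa>_def field_simps)
  have "\<mu> * (1 - t) = s - t" using t by (simp add: \<mu>_def)
  moreover have "(1-\<mu>)*t + \<mu>*1 = t + \<mu> * (1 - t)" by (simp add: algebra_simps)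
  ultimately have e1: "(1-\<mu>)*t + \<mu>*1 = s" by simp
  have e2: "(1-\<kappa>) * s + \<kappa>*0 = t" using s by (simp add: \<kappa>_def field_simps)
  have y: "(1-\<mu>) *\<^sub>R ?X t + \<mu> *\<^sub>R ?X 1 \<in> PS (bt b0 b1 s)"
    using Xs_comb[of t 1 \<mu>] t \<mu> e1 by auto
  have y': "(1-\<kappa>) *\<^sub>R ?X s + \<kappa> *\<^sub>R ?X 0 \<in> PS (bt b0 b1 t)"
    using Xs_comb[of s 0 \<kappa>] s \<kappa> e2 by auto
  have "(norm (?X t - ?X s))\<^sup>2 \<le> norm (?X t) * norm ((1-\<kappa>) *\<^sub>R ?X s + \<kappa> *\<^sub>R ?X 0 - ?X s)
      + norm (?X s) * norm ((1-\<mu>) *\<^sub>R ?X t + \<mu> *\<^sub>R ?X 1 - ?X t)"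
    unfolding Xs_def by (rule dot_ineq[OF bt_ne' bt_ne' y[unfolded Xs_def] y'[unfolded Xs_def]]) (use t s in auto)
  also have "\<dots> = norm (?X t) * (\<kappa> * norm (?X 0 - ?X s)) + norm (?X s) * (\<mu> * norm (?X 1 - ?X t))"
    using \<mu> \<kappa> by (simp add: comb_dist)
  also have "\<dots> \<le> Rb * (\<kappa> * (2 * Rb)) + Rb * (\<mu> * (2 * Rb))"
    using \<mu> \<kappa> t s Xs_bound Xs_diff_bound Rb_nonneg
    by (intro add_mono mult_mono mult_left_mono) auto
  also have "\<dots> = 2 * Rb\<^sup>2 * (\<mu> + \<kappa>)" by (simp add: power2_eq_square algebra_simps)
  finally show ?thesis by (simp add: norm_minus_commute \<mu>_def \<kappa>_def)
qed

lemma key_ineq':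
  assumes t: "0 < t" "t < 1" and s: "0 < s" "s < 1" and st: "s \<le> t"
  shows "(norm (Xs b0 b1 s - Xs b0 b1 t))\<^sup>2 \<le> 2 * Rb\<^sup>2 * ((t - s) / t + (t - s) / (1 - s))"
proof -
  let ?X = "Xs b0 b1"
  define \<mu> where "\<mu> = (t - s) / t"
  define \<kappa> where "\<kappa> = (t - s) / (1 - s)"
  have \<mu>: "0 \<le> \<mu>" "\<mu> \<le> 1" using t s st by (auto simp: \<mu>_def field_simps)
  have \<kappa>: "0 \<le> \<kappa>" "\<kappa> \<le> 1" using t s st by (auto simp: \<kappa>_def field_simps)
  have e1: "(1-\<mu>)*t + \<mu>*0 = s" using t by (simp add: \<mu>_def field_simps)
  have "\<kappa> * (1 - s) = t - s" using s by (simp add: \<kappa>_def)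
  moreover have "(1-\<kappa>) * s + \<kappa> * 1 = s + \<kappa> * (1 - s)" by (simp add: algebra_simps)
  ultimately have e2: "(1-\<kappa>) * s + \<kappa> * 1 = t" by simp
  have y: "(1-\<mu>) *\<^sub>R ?X t + \<mu> *\<^sub>R ?X 0 \<in> PS (bt b0 b1 s)"
    using Xs_comb[of t 0 \<mu>] t \<mu> e1 by auto
  have y': "(1-\<kappa>) *\<^sub>R ?X s + \<kappa> *\<^sub>R ?X 1 \<in> PS (bt b0 b1 t)"
    using Xs_comb[of s 1 \<kappa>] s \<kappa> e2 by auto
  have "(norm (?X t - ?X s))\<^sup>2 \<le> norm (?X t) * norm ((1-\<kappa>) *\<^sub>R ?X s + \<kappa> *\<^sub>R ?X 1 - ?X s)
      + norm (?X s) * norm ((1-\<mu>) *\<^sub>R ?X t + \<mu> *\<^sub>R ?X 0 - ?X t)"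
    unfolding Xs_def by (rule dot_ineq[OF bt_ne' bt_ne' y[unfolded Xs_def] y'[unfolded Xs_def]]) (use t s in auto)
  also have "\<dots> = norm (?X t) * (\<kappa> * norm (?X 1 - ?X s)) + norm (?X s) * (\<mu> * norm (?X 0 - ?X t))"
    using \<mu> \<kappa> by (simp add: comb_dist)
  also have "\<dots> \<le> Rb * (\<kappa> * (2 * Rb)) + Rb * (\<mu> * (2 * Rb))"
    using \<mu> \<kappa> t s Xs_bound Xs_diff_bound Rb_nonneg
    by (intro add_mono mult_mono mult_left_mono) auto
  also have "\<dots> = 2 * Rb\<^sup>2 * (\<mu> + \<kappa>)" by (simp add: power2_eq_square algebra_simps)
  finally show ?thesis by (simp add: norm_minus_commute \<mu>_def \<kappa>_def)
qed

lemma Xs_cont: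
  assumes t: "0 < t" "t < 1"
  shows "(Xs b0 b1 \<longlongrightarrow> Xs b0 b1 t) (at t within {0<..<1})"
proof -
  let ?X = "Xs b0 b1"
  define B where "B s = 2 * Rb\<^sup>2 * (\<bar>s - t\<bar> * (1/t + 1/(1-t) + 1/s + 1/(1-s)))" for s
  have bnd: "(norm (?X s - ?X t))\<^sup>2 \<le> B s" if s: "0 < s" "s < 1" for s
  proof (cases "t \<le> s")
    case True
    have "(s - t) / (1 - t) + (s - t) / s = \<bar>s - t\<bar> * (1/(1-t)) + \<bar>s - t\<bar> * (1/s)"
      using True by simp
    moreover have "\<bar>s - t\<bar> * (1/t) \<ge> 0" "\<bar>s - t\<bar> * (1/(1-s)) \<ge> 0" using t s by auto
    ultimately have "(s - t) / (1 - t) + (s - t) / s \<le> \<bar>s - t\<bar> * (1/t + 1/(1-t) + 1/s + 1/(1-s))"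
      by (simp add: distrib_left)
    then show ?thesis using key_ineq[OF t s True] unfolding B_def
      by (smt (verit) mult_left_mono zero_le_power2 mult_nonneg_nonneg)
  next
    case False
    have "(t - s) / t + (t - s) / (1 - s) = \<bar>s - t\<bar> * (1/t) + \<bar>s - t\<bar> * (1/(1-s))"
      using False by simp
    moreover have "\<bar>s - t\<bar> * (1/(1-t)) \<ge> 0" "\<bar>s - t\<bar> * (1/s) \<ge> 0" using t s by auto
    ultimately have "(t - s) / t + (t - s) / (1 - s) \<le> \<bar>s - t\<bar> * (1/t + 1/(1-t) + 1/s + 1/(1-s))"
      by (simp add: distrib_left)
    then show ?thesis using key_ineq'[OF t s] False unfolding B_def
      by (smt (verit) mult_left_mono zero_le_power2 mult_nonneg_nonneg)
  qed
  have "(B \<longlongrightarrow> B t) (at t within {0<..<1})"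
    unfolding B_def using t by (intro tendsto_intros) auto
  then have B0: "(B \<longlongrightarrow> 0) (at t within {0<..<1})" by (simp add: B_def)
  have "((\<lambda>s. ?X s - ?X t) \<longlongrightarrow> 0) (at t within {0<..<1})"
  proof (rule Lim_null_comparison)
    show "eventually (\<lambda>s. norm (?X s - ?X t) \<le> sqrt (B s)) (at t within {0<..<1})"
      unfolding eventually_at_filter
      by (intro always_eventually allI impI real_le_rsqrt bnd) auto
    show "((\<lambda>s. sqrt (B s)) \<longlongrightarrow> 0) (at t within {0<..<1})"
      using tendsto_real_sqrt[OF B0] by simp
  qed
  then show ?thesis by (simp add: LIM_zero_iff)
qed

definition "Kb = (\<Sum>j\<in>J. \<bar>b1 j - b0 j\<bar>)"

lemma Kb_nonneg: "Kb \<ge> 0" unfolding Kb_def by (simp add: sum_nonneg)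

lemma Xs_local:
  assumes t: "0 < t" "t < 1"
  shows "\<exists>d>0. \<forall>s\<in>{0<..<1}. \<bar>s - t\<bar> < d \<longrightarrow> norm (Xs b0 b1 s - Xs b0 b1 t) \<le> Lc * Kb * \<bar>s - t\<bar>"
proof -
  let ?X = "Xs b0 b1" and ?F = "at t within {0<..<(1::real)}" and ?b = "bt b0 b1"
  have cont: "(?X \<longlongrightarrow> ?X t) ?F" using Xs_cont[OF t] .
  have neb: "PS (?b s) \<noteq> {}" if "s \<in> {0<..<1}" for s using bt_ne' that by auto
  have Xt: "?X t \<in> PS (?b t)" unfolding Xs_def using xb_in neb t by auto
  have ev0: "eventually (\<lambda>s. s \<in> {0<..<1}) ?F" by (simp add: eventually_at_filter)
  have "\<forall>j\<in>J - act (?b t). eventually (\<lambda>s. 0 < ?b s j - g j (?X s)) ?F"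
  proof
    fix j assume j: "j \<in> J - act (?b t)"
    then have lt: "g j (?X t) < ?b t j" using Xt unfolding PS_def act_def Xs_def by force
    have bl: "bounded_linear (g j)" using lin j linear_conv_bounded_linear by blast
    have "((\<lambda>s. ?b s j - g j (?X s)) \<longlongrightarrow> ?b t j - g j (?X t)) ?F"
      unfolding bt_def by (intro tendsto_intros bounded_linear.tendsto[OF bl cont])
    then show "eventually (\<lambda>s. 0 < ?b s j - g j (?X s)) ?F"
      using lt by (intro order_tendstoD(1)) auto
  qed
  then have "eventually (\<lambda>s. \<forall>j\<in>J - act (?b t). 0 < ?b s j - g j (?X s)) ?F"
    using finJ by (subst eventually_ball_finite_distrib) auto
  then have ev1: "eventually (\<lambda>s. act (?b s) \<subseteq> act (?b t)) ?F"
  proof (rule eventually_mono)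
    fix s assume h: "\<forall>j\<in>J - act (?b t). 0 < ?b s j - g j (?X s)"
    show "act (?b s) \<subseteq> act (?b t)"
    proof
      fix j assume j: "j \<in> act (?b s)"
      show "j \<in> act (?b t)"
      proof (rule ccontr)
        assume "j \<notin> act (?b t)"
        then have "0 < ?b s j - g j (?X s)" using h j act_sub by blast
        then show False using j unfolding act_def Xs_def by simp
      qed
    qed
  qed
  have "\<forall>E\<in>Pow (act (?b t)). eventually (\<lambda>s. pE E (?b t) \<noteq> ?X t \<longrightarrow> act (?b s) \<noteq> E) ?F"
  proof
    fix E assume E: "E \<in> Pow (act (?b t))"
    then have EJ: "E \<subseteq> J" using act_sub by blast
    have XtV: "?X t \<in> VS E (?b t)" using E unfolding VS_def act_def Xs_def by auto
    show "eventually (\<lambda>s. pE E (?b t) \<noteq> ?X t \<longrightarrow> act (?b s) \<noteq> E) ?F"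
    proof (cases "pE E (?b t) = ?X t")
      case True then show ?thesis by simp
    next
      case False
      define gap where "gap = norm (pE E (?b t) - ?X t)"
      have gp: "gap > 0" using False by (simp add: gap_def)
      have e1: "eventually (\<lambda>s. dist (?X s) (?X t) < gap/2) ?F"
        using cont gp by (intro tendstoD) auto
      have "((\<lambda>s. Lc * Kb * \<bar>s - t\<bar>) \<longlongrightarrow> Lc * Kb * \<bar>t - t\<bar>) ?F"
        by (intro tendsto_intros)
      then have e2: "eventually (\<lambda>s. Lc * Kb * \<bar>s - t\<bar> < gap/2) ?F"
        using gp by (intro order_tendstoD(2)) auto
      have "eventually (\<lambda>s. s \<in> {0<..<1} \<and> dist (?X s) (?X t) < gap/2 \<and> Lc * Kb * \<bar>s - t\<bar> < gap/2) ?F"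
        using ev0 e1 e2 by eventually_elim auto
      then show ?thesis
      proof (rule eventually_mono, intro impI notI)
        fix s assume s: "s \<in> {0<..<1} \<and> dist (?X s) (?X t) < gap/2 \<and> Lc * Kb * \<bar>s - t\<bar> < gap/2"
          and a: "act (?b s) = E"
        have Xs_eq: "?X s = pE E (?b s)" using xb_pE[OF neb] s a unfolding Xs_def by auto
        have XsV: "?X s \<in> VS E (?b s)" using a unfolding VS_def act_def Xs_def by auto
        have "norm (pE E (?b s) - pE E (?b t)) \<le> Lc * (\<Sum>j\<in>J. \<bar>?b s j - ?b t j\<bar>)"
          using pE_lip[OF EJ] XsV XtV by blast
        also have "\<dots> = Lc * Kb * \<bar>s - t\<bar>" unfolding bt_diff Kb_def by simp
        finally have "norm (?X s - pE E (?b t)) < gap/2" using s Xs_eq by simp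
        moreover have "norm (?X s - ?X t) < gap/2" using s by (simp add: dist_norm)
        ultimately have "norm (pE E (?b t) - ?X t) < gap"
          using norm_triangle_ineq4[of "?X s - ?X t" "?X s - pE E (?b t)"]
          by (simp add: norm_minus_commute)
        then show False by (simp add: gap_def)
      qed
    qed
  qed
  then have ev2: "eventually (\<lambda>s. \<forall>E\<in>Pow (act (?b t)). pE E (?b t) \<noteq> ?X t \<longrightarrow> act (?b s) \<noteq> E) ?F"
    using finJ act_sub by (subst eventually_ball_finite_distrib) (auto intro: finite_subset)
  have "eventually (\<lambda>s. norm (?X s - ?X t) \<le> Lc * Kb * \<bar>s - t\<bar>) ?F"
    using ev0 ev1 ev2
  proof (eventually_elim)
    case (elim s)
    define E where "E = act (?b s)"
    have E: "E \<in> Pow (act (?b t))" using elim unfolding E_def by auto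
    then have EJ: "E \<subseteq> J" using act_sub by blast
    have pt: "pE E (?b t) = ?X t" using elim E unfolding E_def by blast
    have Xs_eq: "?X s = pE E (?b s)" using xb_pE[OF neb] elim unfolding Xs_def E_def by auto
    have XsV: "?X s \<in> VS E (?b s)" unfolding VS_def act_def Xs_def E_def by auto
    have XtV: "?X t \<in> VS E (?b t)" using E unfolding VS_def act_def Xs_def by auto
    have "norm (pE E (?b s) - pE E (?b t)) \<le> Lc * (\<Sum>j\<in>J. \<bar>?b s j - ?b t j\<bar>)"
      using pE_lip[OF EJ] XsV XtV by blast
    also have "\<dots> = Lc * Kb * \<bar>s - t\<bar>" unfolding bt_diff Kb_def by simp
    finally show ?case using pt Xs_eq by simp
  qed
  then obtain d where d: "d > 0" "\<forall>s\<in>{0<..<1}. s \<noteq> t \<and> dist s t < d \<longrightarrow> norm (?X s - ?X t) \<le> Lc * Kb * \<bar>s - t\<bar>"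
    unfolding eventually_at by blast
  show ?thesis
  proof (intro exI[of _ d] conjI d(1) ballI impI)
    fix s assume "s \<in> {0<..<(1::real)}" "\<bar>s - t\<bar> < d"
    then show "norm (?X s - ?X t) \<le> Lc * Kb * \<bar>s - t\<bar>"
      using d(2) by (cases "s = t") (auto simp: dist_real_def)
  qed
qed

lemma Xs_lip_cd:
  assumes cd: "0 < c" "c \<le> d" "d < 1"
  shows "norm (Xs b0 b1 d - Xs b0 b1 c) \<le> Lc * Kb * (d - c)"
proof -
  let ?X = "Xs b0 b1"
  define Pr where "Pr a b \<longleftrightarrow> (c \<le> a \<longrightarrow> b \<le> d \<longrightarrow> norm (?X b - ?X a) \<le> Lc * Kb * (b - a))" for a b
  have "Pr c d"
  proof (rule Bolzano[where P=Pr, OF cd(2)])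
    fix a b e assume trans: "Pr a b" "Pr b e" "a \<le> b" "b \<le> e"
    show "Pr a e"
      unfolding Pr_def
    proof (intro impI)
      assume "c \<le> a" "e \<le> d"
      then have "norm (?X b - ?X a) \<le> Lc * Kb * (b - a)" "norm (?X e - ?X b) \<le> Lc * Kb * (e - b)"
        using trans unfolding Pr_def by auto
      then have "norm (?X e - ?X a) \<le> Lc * Kb * (b - a) + Lc * Kb * (e - b)"
        using norm_triangle_ineq[of "?X e - ?X b" "?X b - ?X a"] by simp
      then show "norm (?X e - ?X a) \<le> Lc * Kb * (e - a)" by (simp add: algebra_simps)
    qed
  next
    fix x assume "c \<le> x" "x \<le> d"
    then have x: "0 < x" "x < 1" using cd by auto
    obtain \<delta> where \<delta>: "\<delta> > 0" "\<forall>s\<in>{0<..<1}. \<bar>s - x\<bar> < \<delta> \<longrightarrow> norm (?X s - ?X x) \<le> Lc * Kb * \<bar>s - x\<bar>"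
      using Xs_local[OF x] by blast
    show "\<exists>d>0. \<forall>a b. a \<le> x \<and> x \<le> b \<and> b - a < d \<longrightarrow> Pr a b"
      unfolding Pr_def
    proof (intro exI[of _ \<delta>] conjI \<delta>(1) allI impI)
      fix a b assume ab: "a \<le> x \<and> x \<le> b \<and> b - a < \<delta>" "c \<le> a" "b \<le> d"
      have "b \<in> {0<..<1}" "\<bar>b - x\<bar> < \<delta>" "a \<in> {0<..<1}" "\<bar>a - x\<bar> < \<delta>" using ab cd by auto
      then have "norm (?X b - ?X x) \<le> Lc * Kb * \<bar>b - x\<bar>" "norm (?X a - ?X x) \<le> Lc * Kb * \<bar>a - x\<bar>"
        using \<delta>(2) by blast+
      then have "norm (?X b - ?X a) \<le> Lc * Kb * \<bar>b - x\<bar> + Lc * Kb * \<bar>a - x\<bar>"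
        using norm_triangle_ineq4[of "?X b - ?X x" "?X a - ?X x"] by simp
      also have "\<dots> = Lc * Kb * (b - a)" using ab by (simp add: algebra_simps)
      finally show "norm (?X b - ?X a) \<le> Lc * Kb * (b - a)" .
    qed
  qed
  then show ?thesis unfolding Pr_def by simp
qed

lemma Xs_lip_open:
  assumes "0 < s" "s < 1" "0 < t" "t < 1"
  shows "norm (Xs b0 b1 s - Xs b0 b1 t) \<le> Lc * Kb * \<bar>s - t\<bar>"
proof (cases "t \<le> s")
  case True then show ?thesis using Xs_lip_cd[of t s] assms by simp
next
  case False then show ?thesis using Xs_lip_cd[of s t] assms by (simp add: norm_minus_commute)
qed

lemma Xs_end0:
  assumes t: "0 < t" "t < 1"
  shows "norm (Xs b0 b1 t - xb b0) \<le> Lc * (\<Sum>j\<in>J. \<bar>b1 j - b0 j\<bar>) * t"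
proof -
  let ?X = "Xs b0 b1"
  define s where "s n = inverse (real (Suc n)) / 2" for n
  have s01: "0 < s n" "s n < 1" for n
  proof -
    have "inverse (real (Suc n)) \<le> 1" by (simp add: inverse_le_1_iff)
    then show "0 < s n" "s n < 1" unfolding s_def by auto
  qed
  have s0: "s \<longlonglongrightarrow> 0"
    unfolding s_def using tendsto_divide_zero[OF LIMSEQ_inverse_real_of_nat, of 2] by simp
  define Y where "Y n = ?X (s n)" for n
  have LK: "Lc * Kb \<ge> 0" using Lc_nonneg Kb_nonneg by simp
  have YL: "norm (Y m - Y n) \<le> Lc * Kb * \<bar>s m - s n\<bar>" for m n
    unfolding Y_def using Xs_lip_open s01 by blast
  have "Cauchy Y"
    unfolding Cauchy_def
  proof (intro allI impI)
    fix e :: real assume e: "e > 0"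
    then have "e / (Lc * Kb + 1) > 0" using LK by simp
    then obtain M where M: "\<forall>m\<ge>M. \<forall>n\<ge>M. dist (s m) (s n) < e / (Lc * Kb + 1)"
      using LIMSEQ_imp_Cauchy[OF s0] unfolding Cauchy_def by blast
    show "\<exists>M. \<forall>m\<ge>M. \<forall>n\<ge>M. dist (Y m) (Y n) < e"
    proof (intro exI[of _ M] allI impI)
      fix m n assume "m \<ge> M" "n \<ge> M"
      then have d: "\<bar>s m - s n\<bar> < e / (Lc * Kb + 1)" using M by (simp add: dist_real_def)
      have "dist (Y m) (Y n) \<le> Lc * Kb * \<bar>s m - s n\<bar>" using YL by (simp add: dist_norm)
      also have "\<dots> \<le> Lc * Kb * (e / (Lc * Kb + 1))" using d LK by (intro mult_left_mono) auto
      also have "\<dots> < e" using LK e by (simp add: field_simps)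
      finally show "dist (Y m) (Y n) < e" .
    qed
  qed
  then obtain y where Yy: "Y \<longlonglongrightarrow> y" unfolding Cauchy_convergent_iff convergent_def by blast
  have yP: "y \<in> PS b0"
    unfolding PS_def
  proof (intro CollectI ballI)
    fix j assume j: "j \<in> J"
    have bl: "bounded_linear (g j)" using lin j linear_conv_bounded_linear by blast
    have "(\<lambda>n. g j (Y n)) \<longlonglongrightarrow> g j y" by (rule bounded_linear.tendsto[OF bl Yy])
    moreover have "(\<lambda>n. bt b0 b1 (s n) j) \<longlonglongrightarrow> bt b0 b1 0 j"
      unfolding bt_def by (intro tendsto_intros s0)
    moreover have "g j (Y n) \<le> bt b0 b1 (s n) j" for n
      using xb_in[OF bt_ne'[of "s n"]] s01[of n] j unfolding Y_def Xs_def PS_def by auto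
    ultimately show "g j y \<le> b0 j" using LIMSEQ_le by fastforce
  qed
  have "norm y \<le> norm (xb b0)"
  proof -
    have "(\<lambda>n. norm (Y n)) \<longlonglongrightarrow> norm y" by (intro tendsto_intros Yy)
    moreover have "(\<lambda>n. (1 - s n) * norm (xb b0) + s n * norm (xb b1)) \<longlonglongrightarrow> (1 - 0) * norm (xb b0) + 0 * norm (xb b1)"
      by (intro tendsto_intros s0)
    moreover have "norm (Y n) \<le> (1 - s n) * norm (xb b0) + s n * norm (xb b1)" for n
    proof -
      have "norm (Y n) \<le> norm ((1 - s n) *\<^sub>R xb b0 + s n *\<^sub>R xb b1)"
        unfolding Y_def Xs_def using xb_le[OF bt_ne] s01[of n] by auto
      also have "\<dots> \<le> (1 - s n) * norm (xb b0) + s n * norm (xb b1)"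
        using s01[of n] by (smt (verit) norm_scaleR norm_triangle_ineq abs_of_nonneg)
      finally show ?thesis .
    qed
    ultimately show ?thesis using LIMSEQ_le by fastforce
  qed
  then have yx: "y = xb b0" using xb_unique[OF yP] by simp
  have "(\<lambda>n. norm (?X t - Y n)) \<longlonglongrightarrow> norm (?X t - y)" by (intro tendsto_intros Yy)
  moreover have "(\<lambda>n. Lc * Kb * \<bar>t - s n\<bar>) \<longlonglongrightarrow> Lc * Kb * \<bar>t - 0\<bar>" by (intro tendsto_intros s0)
  moreover have "norm (?X t - Y n) \<le> Lc * Kb * \<bar>t - s n\<bar>" for n
    unfolding Y_def using Xs_lip_open s01 t by blast
  ultimately have "norm (?X t - y) \<le> Lc * Kb * \<bar>t - 0\<bar>" using LIMSEQ_le by fastforce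
  then show ?thesis using yx t by (simp add: Kb_def)
qed

end

lemma bt_swap: "bt b1 b0 (1 - t) = bt b0 b1 t"
  unfolding bt_def by (rule ext) (simp add: algebra_simps)

lemma Kb_swap: "(\<Sum>j\<in>J. \<bar>(b0::'j\<Rightarrow>real) j - b1 j\<bar>) = (\<Sum>j\<in>J. \<bar>b1 j - b0 j\<bar>)"
  by (rule sum.cong) (auto intro: abs_minus_commute)

theorem xb_lipschitz:
  assumes ne0: "PS b0 \<noteq> {}" and ne1: "PS b1 \<noteq> {}"
  shows "norm (xb b0 - xb b1) \<le> Lc * (\<Sum>j\<in>J. \<bar>b0 j - b1 j\<bar>)"
proof -
  let ?K = "(\<Sum>j\<in>J. \<bar>b0 j - b1 j\<bar>)"
  have a: "norm (Xs b0 b1 (1/2) - xb b0) \<le> Lc * ?K * (1/2)"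
    using Xs_end0[OF ne0 ne1, of "1/2"] Kb_swap[of b0 b1] by simp
  have "norm (Xs b1 b0 (1 - 1/2) - xb b1) \<le> Lc * ?K * (1 - 1/2)"
    using Xs_end0[OF ne1 ne0, of "1 - 1/2"] by simp
  then have b: "norm (Xs b0 b1 (1/2) - xb b1) \<le> Lc * ?K * (1/2)"
    unfolding Xs_def bt_swap by simp
  have "norm (xb b0 - xb b1) \<le> norm (Xs b0 b1 (1/2) - xb b0) + norm (Xs b0 b1 (1/2) - xb b1)"
    using norm_triangle_ineq4[of "Xs b0 b1 (1/2) - xb b1" "Xs b0 b1 (1/2) - xb b0"] by (simp add: norm_minus_commute)
  also have "\<dots> \<le> Lc * ?K" using a b by simp
  finally show ?thesis .
qed

end



lemma diagm_mult: "diagm v *v x = (\<chi> i. v $ i * x $ i)"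
proof -
  have "(\<Sum>j\<in>UNIV. (if i = j then v $ i else 0) * x $ j) = (\<Sum>j\<in>UNIV. if j = i then v $ i * x $ j else 0)" for i
    by (rule sum.cong) auto
  then have "(\<Sum>j\<in>UNIV. (if i = j then v $ i else 0) * x $ j) = v $ i * x $ i" for i
    by simp
  then show ?thesis unfolding diagm_def matrix_vector_mult_def by (simp add: vec_eq_iff)
qed

datatype 'n cidx = Box 'n bool | Wc nat 'n bool

locale qpctx =
  fixes G :: "('n::finite, 'm::finite) grid" and P :: "'n mpcpar"
  assumes vg: "valid_grid G" and vp: "valid_par G P"
begin

definition Minv :: "real^'n^'n" where "Minv = diagm (\<chi> i. 1 / Mv G $ i)"

definition fstep :: "real^'m \<Rightarrow> real^'n \<Rightarrow> real^'m" where
  "fstep f w = f + Tstep P *\<^sub>R ((diagm (Ybv G) ** Dinc G) *v w)"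
definition wstep :: "real^'m \<Rightarrow> real^'n \<Rightarrow> real^'n \<Rightarrow> real^'n" where
  "wstep f w p = w + Tstep P *\<^sub>R (Minv *v (- (diagm (Ev G) *v w) - (transpose (Dinc G) *v f) + p))"

primrec traj :: "(nat \<Rightarrow> real^'n) \<Rightarrow> real^'m \<Rightarrow> real^'n \<Rightarrow> real^'n \<Rightarrow> nat \<Rightarrow> (real^'m) \<times> (real^'n)" where
  "traj Ph f0 w0 u 0 = (f0, w0)"
| "traj Ph f0 w0 u (Suc k) = (fstep (fst (traj Ph f0 w0 u k)) (snd (traj Ph f0 w0 u k)),
      wstep (fst (traj Ph f0 w0 u k)) (snd (traj Ph f0 w0 u k)) (Ph k + u))"

lemma fstep_add: "fstep (f1 + f2) (w1 + w2) = fstep f1 w1 + fstep f2 w2"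
  unfolding fstep_def by (simp add: algebra_simps)
lemma wstep_add: "wstep (f1 + f2) (w1 + w2) (p1 + p2) = wstep f1 w1 p1 + wstep f2 w2 p2"
  unfolding wstep_def by (simp add: algebra_simps)
lemma fstep_scale: "fstep (c *\<^sub>R f) (c *\<^sub>R w) = c *\<^sub>R fstep f w"
  unfolding fstep_def by (simp add: algebra_simps)
lemma wstep_scale: "wstep (c *\<^sub>R f) (c *\<^sub>R w) (c *\<^sub>R p) = c *\<^sub>R wstep f w p"
  unfolding wstep_def by (simp add: algebra_simps)

lemma traj_add: "traj (\<lambda>k. P1 k + P2 k) (f1 + f2) (w1 + w2) (u1 + u2) k = traj P1 f1 w1 u1 k + traj P2 f2 w2 u2 k"
proof (induction k)
  case 0 then show ?case by simp
next
  case (Suc k)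
  have e: "P1 k + P2 k + (u1 + u2) = (P1 k + u1) + (P2 k + u2)" by (simp add: algebra_simps)
  show ?case
    unfolding traj.simps Suc.IH fst_add snd_add e fstep_add wstep_add by simp
qed

lemma traj_scale: "traj (\<lambda>k. c *\<^sub>R P1 k) (c *\<^sub>R f1) (c *\<^sub>R w1) (c *\<^sub>R u1) k = c *\<^sub>R traj P1 f1 w1 u1 k"
proof (induction k)
  case 0 then show ?case by simp
next
  case (Suc k)
  have e: "c *\<^sub>R P1 k + c *\<^sub>R u1 = c *\<^sub>R (P1 k + u1)" by (simp add: algebra_simps)
  show ?case
    unfolding traj.simps Suc.IH fst_scaleR snd_scaleR e fstep_scale wstep_scale by simp
qed

lemma traj_decomp: "traj Ph f0 w0 u k = traj Ph f0 w0 0 k + traj (\<lambda>_. 0) 0 0 u k"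
  using traj_add[of Ph "\<lambda>_. 0" f0 0 w0 0 0 u k] by simp

lemma traj_diff: "traj P1 f1 w1 u k - traj P2 f2 w2 u k = traj (\<lambda>k. P1 k - P2 k) (f1 - f2) (w1 - w2) 0 k"
  using traj_add[of "\<lambda>k. P1 k - P2 k" P2 "f1 - f2" f2 "w1 - w2" w2 0 u k] by simp

definition Lu :: "nat \<Rightarrow> real^'n \<Rightarrow> real^'n" where "Lu k u = snd (traj (\<lambda>_. 0) 0 0 u (Suc k))"

lemma Lu_linear: "linear (Lu k)"
proof (rule linearI)
  fix x y show "Lu k (x + y) = Lu k x + Lu k y"
    using traj_add[of "\<lambda>_. 0" "\<lambda>_. 0" 0 0 0 0 x y "Suc k"] unfolding Lu_def by simp
next
  fix c :: real and x show "Lu k (c *\<^sub>R x) = c *\<^sub>R Lu k x"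
    using traj_scale[of c "\<lambda>_. 0" 0 0 x "Suc k"] unfolding Lu_def by simp
qed

lemma Mpos: "Mv G $ i > 0" using vg unfolding valid_grid_def by auto
lemma Minv_M: "Minv *v (diagm (Mv G) *v x) = x"
  unfolding Minv_def diagm_mult using Mpos by (simp add: vec_eq_iff less_imp_neq[symmetric])
lemma M_Minv: "diagm (Mv G) *v (Minv *v x) = x"
  unfolding Minv_def diagm_mult using Mpos by (simp add: vec_eq_iff less_imp_neq[symmetric])

definition sc :: "'n \<Rightarrow> real" where "sc i = (if i \<in> Iu G then sqrt (cw P i) else 1)"
definition sdd :: real where "sdd = sqrt (dw P)"

lemma sc_pos: "sc i > 0" using vp unfolding sc_def valid_par_def by auto
lemma sdd_pos: "sdd > 0" using vp unfolding sdd_def valid_par_def by auto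

definition Uof :: "(real^'n) \<times> real \<Rightarrow> real^'n" where "Uof z = (\<chi> i. fst z $ i / sc i)"
definition Bof :: "(real^'n) \<times> real \<Rightarrow> real" where "Bof z = snd z / sdd"
definition Zof :: "real^'n \<Rightarrow> real \<Rightarrow> (real^'n) \<times> real" where "Zof u \<beta> = ((\<chi> i. sc i * u $ i), sdd * \<beta>)"

lemma Uof_Zof[simp]: "Uof (Zof u \<beta>) = u"
  unfolding Uof_def Zof_def using sc_pos by (simp add: vec_eq_iff less_imp_neq[symmetric])
lemma Bof_Zof[simp]: "Bof (Zof u \<beta>) = \<beta>"
  unfolding Bof_def Zof_def using sdd_pos by simp
lemma Zof_UB[simp]: "Zof (Uof z) (Bof z) = z"
  unfolding Uof_def Zof_def Bof_def using sc_pos sdd_pos by (simp add: vec_eq_iff prod_eq_iff less_imp_neq[symmetric])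

lemma Uof_linear: "linear Uof"
  by (rule linearI) (auto simp: Uof_def vec_eq_iff add_divide_distrib)
lemma Bof_linear: "linear Bof"
  by (rule linearI) (auto simp: Bof_def add_divide_distrib)

definition Jset :: "'n cidx set" where
  "Jset = range (\<lambda>(i,s). Box i s) \<union> (\<lambda>(k,i,s). Wc k i s) ` ({..<Nh P} \<times> Iw G \<times> UNIV)"

definition sgn1 :: "bool \<Rightarrow> real" where "sgn1 s = (if s then 1 else -1)"

definition gc :: "'n cidx \<Rightarrow> (real^'n) \<times> real \<Rightarrow> real" where
  "gc j z = (case j of Box i s \<Rightarrow> sgn1 s * (Uof z $ i)
                     | Wc k i s \<Rightarrow> sgn1 s * (Lu k (Uof z) $ i) - Bof z)"

definition bc :: "(nat \<Rightarrow> real^'n) \<Rightarrow> real^'m \<Rightarrow> real^'n \<Rightarrow> real^'n \<Rightarrow> 'n cidx \<Rightarrow> real" where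
  "bc Ph f0 w0 a0 j = (case j of Box i s \<Rightarrow> epsv P i * \<bar>a0 $ i\<bar>
       | Wc k i s \<Rightarrow> (if s then whi P i - snd (traj Ph f0 w0 0 (Suc k)) $ i
                    else snd (traj Ph f0 w0 0 (Suc k)) $ i - wlo P i))"

lemma finite_Jset: "finite Jset"
  unfolding Jset_def by auto

lemma gc_linear: "linear (gc j)"
proof (cases j)
  case (Box i s)
  show ?thesis unfolding Box gc_def
    by (rule linearI) (auto simp: linear_add[OF Uof_linear] linear_scale[OF Uof_linear] algebra_simps)
next
  case (Wc k i s)
  show ?thesis unfolding Wc gc_def
    by (rule linearI) (auto simp: linear_add[OF Uof_linear] linear_scale[OF Uof_linear]
        linear_add[OF Lu_linear] linear_scale[OF Lu_linear] linear_add[OF Bof_linear] linear_scale[OF Bof_linear] algebra_simps)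
qed

sublocale pp: polyproj Jset gc
  by (rule polyproj.intro[OF finite_Jset gc_linear])

primrec atraj :: "real^'n \<Rightarrow> (nat \<Rightarrow> real^'n) \<Rightarrow> real^'n \<Rightarrow> nat \<Rightarrow> real^'n" where
  "atraj a0 w u 0 = a0"
| "atraj a0 w u (Suc k) = (\<chi> i. if i \<in> Iu G then atraj a0 w u k $ i + Tstep P * (- atraj a0 w u k $ i / Tf P i - w k $ i + u $ i) else 0)"

lemma feas_traj:
  assumes F: "qp_feas G P Ph f0 w0 a0 fh wh ah u \<beta>"
  shows "k \<le> Nh P \<Longrightarrow> fh k = fst (traj Ph f0 w0 u k) \<and> wh k = snd (traj Ph f0 w0 u k)"
proof (induction k)
  case 0 then show ?case using F unfolding qp_feas_def by simp
next
  case (Suc k)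
  then have k: "k < Nh P" by simp
  with Suc have IH: "fh k = fst (traj Ph f0 w0 u k)" "wh k = snd (traj Ph f0 w0 u k)" by auto
  have f: "fh (Suc k) = fh k + Tstep P *\<^sub>R ((diagm (Ybv G) ** Dinc G) *v wh k)"
    using F k unfolding qp_feas_def by blast
  have w: "diagm (Mv G) *v wh (Suc k) = diagm (Mv G) *v wh k +
         Tstep P *\<^sub>R (- (diagm (Ev G) *v wh k) - (transpose (Dinc G) *v fh k) + Ph k + u)"
    using F k unfolding qp_feas_def by blast
  have "wh (Suc k) = Minv *v (diagm (Mv G) *v wh (Suc k))" by (simp add: Minv_M)
  also have "\<dots> = wh k + Tstep P *\<^sub>R (Minv *v (- (diagm (Ev G) *v wh k) - (transpose (Dinc G) *v fh k) + (Ph k + u)))"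
    unfolding w by (simp add: matrix_vector_right_distrib matrix_vector_mult_scaleR Minv_M add.assoc)
  finally show ?case using f IH by (simp add: fstep_def wstep_def)
qed

lemma wlin: "snd (traj Ph f0 w0 u (Suc k)) = snd (traj Ph f0 w0 0 (Suc k)) + Lu k u"
  using traj_decomp[of Ph f0 w0 u "Suc k"] unfolding Lu_def by simp

lemma eps_pos: "epsv P i > 0" using vp unfolding valid_par_def by auto

lemma Wc_in: "Wc k i s \<in> Jset \<Longrightarrow> k < Nh P \<and> i \<in> Iw G"
  unfolding Jset_def by auto
lemma Wc_in2: "k < Nh P \<Longrightarrow> i \<in> Iw G \<Longrightarrow> Wc k i s \<in> Jset"
  unfolding Jset_def by (intro UnI2 image_eqI[where x="(k,i,s)"]) auto
lemma Box_in: "Box i s \<in> Jset"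
  unfolding Jset_def by auto

lemma sgn1_le: "sgn1 s * x \<le> \<bar>x\<bar>" unfolding sgn1_def by auto

lemma feas_PS:
  assumes a0: "a0 \<in> Aset G" and F: "qp_feas G P Ph f0 w0 a0 fh wh ah u \<beta>"
  shows "Zof u \<beta> \<in> pp.PS (bc Ph f0 w0 a0)"
  unfolding pp.PS_def
proof (intro CollectI ballI)
  fix j assume j: "j \<in> Jset"
  have uA: "u \<in> Aset G" using F unfolding qp_feas_def by blast
  show "gc j (Zof u \<beta>) \<le> bc Ph f0 w0 a0 j"
  proof (cases j)
    case (Box i s)
    have "\<bar>u $ i\<bar> \<le> epsv P i * \<bar>a0 $ i\<bar>"
    proof (cases "i \<in> Iu G")
      case True then show ?thesis using F unfolding qp_feas_def by blast
    next
      case False then have "u $ i = 0" using uA unfolding Aset_def by blast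
      then show ?thesis using eps_pos[of i] by simp
    qed
    then show ?thesis using Box sgn1_le[of s "u $ i"] by (simp add: gc_def bc_def)
  next
    case (Wc k i s)
    then have ki: "k < Nh P" "i \<in> Iw G" using Wc_in j by auto
    have "wh (Suc k) = snd (traj Ph f0 w0 u (Suc k))" using feas_traj[OF F, of "Suc k"] ki by simp
    then have wS: "wh (Suc k) = snd (traj Ph f0 w0 0 (Suc k)) + Lu k u" using wlin by simp
    have "wlo P i - \<beta> \<le> wh (Suc k) $ i \<and> wh (Suc k) $ i \<le> whi P i + \<beta>"
      using F ki unfolding qp_feas_def by blast
    then show ?thesis using Wc wS by (auto simp: gc_def bc_def sgn1_def)
  qed
qed

lemma feas_cost:
  assumes F: "qp_feas G P Ph f0 w0 a0 fh wh ah u \<beta>"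
  shows "qp_cost G P u \<beta> = (norm (Zof u \<beta>))\<^sup>2"
proof -
  have uA: "u \<in> Aset G" using F unfolding qp_feas_def by blast
  have e: "(sc i * u $ i) * (sc i * u $ i) = (if i \<in> Iu G then cw P i * (u $ i)\<^sup>2 else 0)" for i
  proof (cases "i \<in> Iu G")
    case True then have "cw P i > 0" using vp unfolding valid_par_def by auto
    then show ?thesis using True by (simp add: sc_def power2_eq_square algebra_simps)
  next
    case False then show ?thesis using uA unfolding Aset_def by simp
  qed
  have "(norm (Zof u \<beta>))\<^sup>2 = (\<Sum>i\<in>UNIV. (sc i * u $ i) * (sc i * u $ i)) + (sdd * \<beta>) * (sdd * \<beta>)"
    unfolding power2_norm_eq_inner Zof_def by (simp add: inner_vec_def)
  also have "\<dots> = (\<Sum>i\<in>UNIV. if i \<in> Iu G then cw P i * (u $ i)\<^sup>2 else 0) + dw P * \<beta>\<^sup>2"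
    using vp unfolding e sdd_def valid_par_def by (simp add: power2_eq_square algebra_simps)
  also have "\<dots> = qp_cost G P u \<beta>"
    unfolding qp_cost_def by (simp add: sum.If_cases)
  finally show ?thesis by simp
qed

lemma PS_feas:
  assumes a0: "a0 \<in> Aset G" and z: "z \<in> pp.PS (bc Ph f0 w0 a0)"
  shows "qp_feas G P Ph f0 w0 a0 (\<lambda>k. fst (traj Ph f0 w0 (Uof z) k)) (\<lambda>k. snd (traj Ph f0 w0 (Uof z) k))
           (atraj a0 (\<lambda>k. snd (traj Ph f0 w0 (Uof z) k)) (Uof z)) (Uof z) (Bof z)"
proof -
  let ?u = "Uof z" and ?\<beta> = "Bof z"
  have zc: "gc j z \<le> bc Ph f0 w0 a0 j" if "j \<in> Jset" for j using z that unfolding pp.PS_def by blast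
  have box: "\<bar>?u $ i\<bar> \<le> epsv P i * \<bar>a0 $ i\<bar>" for i
    using zc[OF Box_in[of i True]] zc[OF Box_in[of i False]] by (simp add: gc_def bc_def sgn1_def)
  have uA: "?u \<in> Aset G"
    unfolding Aset_def
  proof (intro CollectI allI impI)
    fix w assume "w \<notin> Iu G"
    then have "a0 $ w = 0" using a0 unfolding Aset_def by blast
    then show "?u $ w = 0" using box[of w] by simp
  qed
  have wb: "wlo P i - ?\<beta> \<le> snd (traj Ph f0 w0 ?u (Suc k)) $ i \<and> snd (traj Ph f0 w0 ?u (Suc k)) $ i \<le> whi P i + ?\<beta>"
    if "k < Nh P" "i \<in> Iw G" for k i
  proof -
    have "Wc k i True \<in> Jset" "Wc k i False \<in> Jset" using that Wc_in2 by auto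
    from zc[OF this(1)] zc[OF this(2)] show ?thesis
      unfolding wlin[of Ph f0 w0 ?u k] by (simp add: gc_def bc_def sgn1_def)
  qed
  have az: "\<forall>k\<le>Nh P. \<forall>i. i \<notin> Iu G \<longrightarrow> atraj a0 (\<lambda>k. snd (traj Ph f0 w0 ?u k)) ?u k $ i = 0"
  proof (intro allI impI)
    fix k i assume "k \<le> Nh P" "i \<notin> Iu G"
    then show "atraj a0 (\<lambda>k. snd (traj Ph f0 w0 ?u k)) ?u k $ i = 0"
      using a0 unfolding Aset_def by (cases k) auto
  qed
  have c1: "\<forall>k < Nh P. fst (traj Ph f0 w0 ?u (Suc k)) = fst (traj Ph f0 w0 ?u k) + Tstep P *\<^sub>R ((diagm (Ybv G) ** Dinc G) *v snd (traj Ph f0 w0 ?u k))"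
    by (simp add: fstep_def)
  have c2: "diagm (Mv G) *v snd (traj Ph f0 w0 ?u (Suc k)) = diagm (Mv G) *v snd (traj Ph f0 w0 ?u k) +
         Tstep P *\<^sub>R (- (diagm (Ev G) *v snd (traj Ph f0 w0 ?u k)) - (transpose (Dinc G) *v fst (traj Ph f0 w0 ?u k)) + Ph k + ?u)" for k
  proof -
    have "snd (traj Ph f0 w0 ?u (Suc k)) = snd (traj Ph f0 w0 ?u k) + Tstep P *\<^sub>R (Minv *v (- (diagm (Ev G) *v snd (traj Ph f0 w0 ?u k)) - (transpose (Dinc G) *v fst (traj Ph f0 w0 ?u k)) + Ph k + ?u))"
      by (simp add: wstep_def add.assoc)
    then show ?thesis by (simp only: matrix_vector_right_distrib matrix_vector_mult_scaleR M_Minv)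
  qed
  have c3: "\<forall>k < Nh P. \<forall>i\<in>Iu G. atraj a0 (\<lambda>k. snd (traj Ph f0 w0 ?u k)) ?u (Suc k) $ i =
         atraj a0 (\<lambda>k. snd (traj Ph f0 w0 ?u k)) ?u k $ i + Tstep P * (- atraj a0 (\<lambda>k. snd (traj Ph f0 w0 ?u k)) ?u k $ i / Tf P i - snd (traj Ph f0 w0 ?u k) $ i + ?u $ i)"
    by simp
  have c4: "\<forall>i\<in>Iu G. \<bar>?u $ i\<bar> \<le> epsv P i * \<bar>a0 $ i\<bar>" using box by blast
  show ?thesis
    unfolding qp_feas_def
    apply (intro conjI)
    subgoal using c1 by blast
    subgoal using c2 by blast
    subgoal using c3 by blast
    subgoal using az by blast
    subgoal using uA by blast
    subgoal by simp
    subgoal by simp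
    subgoal by simp
    subgoal using wb by blast
    subgoal using c4 by blast
    done
qed

lemma PS_ne: "pp.PS (bc Ph f0 w0 a0) \<noteq> {}"
proof -
  define \<beta>0 where "\<beta>0 = (\<Sum>j\<in>Jset. \<bar>bc Ph f0 w0 a0 j\<bar>)"
  have "Zof 0 \<beta>0 \<in> pp.PS (bc Ph f0 w0 a0)"
    unfolding pp.PS_def
  proof (intro CollectI ballI)
    fix j assume j: "j \<in> Jset"
    have le: "\<bar>bc Ph f0 w0 a0 j\<bar> \<le> \<beta>0"
      unfolding \<beta>0_def using finite_Jset j by (intro member_le_sum) auto
    show "gc j (Zof 0 \<beta>0) \<le> bc Ph f0 w0 a0 j"
    proof (cases j)
      case (Box i s) then show ?thesis using eps_pos[of i] by (simp add: gc_def bc_def)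
    next
      case (Wc k i s) then show ?thesis using le linear_0[OF Lu_linear] by (simp add: gc_def)
    qed
  qed
  then show ?thesis by blast
qed

lemma uopt_eq:
  assumes a0: "a0 \<in> Aset G"
  shows "uopt G P Ph f0 w0 a0 = Uof (pp.xb (bc Ph f0 w0 a0))"
proof -
  let ?b = "bc Ph f0 w0 a0"
  let ?z = "pp.xb ?b"
  have zP: "?z \<in> pp.PS ?b" using pp.xb_in[OF PS_ne] .
  note F = PS_feas[OF a0 zP]
  have cz: "qp_cost G P (Uof ?z) (Bof ?z) = (norm ?z)\<^sup>2" using feas_cost[OF F] by simp
  have opt: "qp_opt G P Ph f0 w0 a0 (\<lambda>k. fst (traj Ph f0 w0 (Uof ?z) k)) (\<lambda>k. snd (traj Ph f0 w0 (Uof ?z) k))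
           (atraj a0 (\<lambda>k. snd (traj Ph f0 w0 (Uof ?z) k)) (Uof ?z)) (Uof ?z) (Bof ?z)"
    unfolding qp_opt_def
  proof (intro conjI F allI impI)
    fix fh' wh' ah' u' \<beta>' assume F': "qp_feas G P Ph f0 w0 a0 fh' wh' ah' u' \<beta>'"
    have "norm ?z \<le> norm (Zof u' \<beta>')" using pp.xb_le[OF feas_PS[OF a0 F']] .
    then have "(norm ?z)\<^sup>2 \<le> (norm (Zof u' \<beta>'))\<^sup>2" by (simp add: power_mono)
    then show "qp_cost G P (Uof ?z) (Bof ?z) \<le> qp_cost G P u' \<beta>'" using cz feas_cost[OF F'] by simp
  qed
  show ?thesis
    unfolding uopt_def
  proof (rule the_equality)
    show "\<exists>fh wh ah \<beta>. qp_opt G P Ph f0 w0 a0 fh wh ah (Uof ?z) \<beta>" using opt by blast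
  next
    fix u assume "\<exists>fh wh ah \<beta>. qp_opt G P Ph f0 w0 a0 fh wh ah u \<beta>"
    then obtain fh wh ah \<beta> where O: "qp_opt G P Ph f0 w0 a0 fh wh ah u \<beta>" by blast
    then have Fu: "qp_feas G P Ph f0 w0 a0 fh wh ah u \<beta>" unfolding qp_opt_def by blast
    have "qp_cost G P u \<beta> \<le> qp_cost G P (Uof ?z) (Bof ?z)" using O F unfolding qp_opt_def by blast
    then have "(norm (Zof u \<beta>))\<^sup>2 \<le> (norm ?z)\<^sup>2" using cz feas_cost[OF Fu] by simp
    then have "norm (Zof u \<beta>) \<le> norm ?z" using power2_le_imp_le by fastforce
    then have "Zof u \<beta> = ?z" using pp.xb_unique[OF feas_PS[OF a0 Fu]] by simp
    then show "u = Uof ?z" by (metis Uof_Zof)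
  qed
qed

lemma uopt_box:
  assumes a0: "a0 \<in> Aset G"
  shows "\<bar>uopt G P Ph f0 w0 a0 $ i\<bar> \<le> epsv P i * \<bar>a0 $ i\<bar>"
proof -
  let ?z = "pp.xb (bc Ph f0 w0 a0)"
  have zP: "?z \<in> pp.PS (bc Ph f0 w0 a0)" using pp.xb_in[OF PS_ne] .
  have "gc (Box i s) ?z \<le> bc Ph f0 w0 a0 (Box i s)" for s using zP Box_in unfolding pp.PS_def by blast
  from this[of True] this[of False] show ?thesis
    unfolding uopt_eq[OF a0] by (simp add: gc_def bc_def sgn1_def)
qed

lemma mat_bound: "\<exists>K\<ge>0. \<forall>x. norm ((A::real^'a::finite^'b::finite) *v x) \<le> K * norm x"
proof -
  have "bounded_linear (\<lambda>x. A *v x)" using matrix_vector_mul_linear linear_conv_bounded_linear by blast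
  from bounded_linear.nonneg_bounded[OF this] show ?thesis by (metis mult.commute)
qed

lemma traj_bound:
  "\<exists>C\<ge>1. \<forall>Ph f w k. norm (fst (traj Ph f w 0 k)) + norm (snd (traj Ph f w 0 k))
            \<le> C ^ k * (norm f + norm w + (\<Sum>l<k. norm (Ph l)))"
proof -
  obtain K1 where K1: "K1 \<ge> 0" "\<forall>x. norm ((diagm (Ybv G) ** Dinc G) *v x) \<le> K1 * norm x" using mat_bound by blast
  obtain K2 where K2: "K2 \<ge> 0" "\<forall>x. norm (Minv *v x) \<le> K2 * norm x" using mat_bound by blast
  obtain K3 where K3: "K3 \<ge> 0" "\<forall>x. norm (diagm (Ev G) *v x) \<le> K3 * norm x" using mat_bound by blast
  obtain K4 where K4: "K4 \<ge> 0" "\<forall>x. norm (transpose (Dinc G) *v x) \<le> K4 * norm x" using mat_bound by blast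
  define T where "T = \<bar>Tstep P\<bar>"
  have T: "T \<ge> 0" unfolding T_def by simp
  define C where "C = 1 + T * (K1 + K2 * K3 + K2 * K4 + K2)"
  have C1: "C \<ge> 1" unfolding C_def using T K1 K2 K3 K4 by simp
  have fs: "norm (fstep f w) \<le> norm f + T * (K1 * norm w)" for f w
  proof -
    have "norm (fstep f w) \<le> norm f + norm (Tstep P *\<^sub>R ((diagm (Ybv G) ** Dinc G) *v w))"
      unfolding fstep_def by (rule norm_triangle_ineq)
    also have "\<dots> \<le> norm f + T * (K1 * norm w)" using K1 T by (simp add: T_def mult_left_mono)
    finally show ?thesis .
  qed
  have ws: "norm (wstep f w p) \<le> norm w + T * (K2 * (K3 * norm w + K4 * norm f + norm p))" for f w p
  proof -
    have "norm (- (diagm (Ev G) *v w) - (transpose (Dinc G) *v f) + p) \<le> K3 * norm w + K4 * norm f + norm p"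
      using K3 K4 norm_triangle_ineq[of "- (diagm (Ev G) *v w) - (transpose (Dinc G) *v f)" p]
        norm_triangle_ineq4[of "- (diagm (Ev G) *v w)" "transpose (Dinc G) *v f"]
      by (smt (verit) norm_minus_cancel)
    then have "norm (Minv *v (- (diagm (Ev G) *v w) - (transpose (Dinc G) *v f) + p)) \<le> K2 * (K3 * norm w + K4 * norm f + norm p)"
      using K2 by (smt (verit) mult_left_mono)
    then have "norm (Tstep P *\<^sub>R (Minv *v (- (diagm (Ev G) *v w) - (transpose (Dinc G) *v f) + p))) \<le> T * (K2 * (K3 * norm w + K4 * norm f + norm p))"
      using T by (simp add: T_def mult_left_mono)
    then show ?thesis unfolding wstep_def using norm_triangle_ineq by (smt (verit))
  qed
  have step: "norm (fstep f w) + norm (wstep f w p) \<le> C * (norm f + norm w) + C * norm p" for f w p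
  proof -
    have "norm (fstep f w) + norm (wstep f w p) \<le> norm f + T * (K1 * norm w) + (norm w + T * (K2 * (K3 * norm w + K4 * norm f + norm p)))"
      using fs ws add_mono by blast
    also have "\<dots> \<le> C * (norm f + norm w) + C * norm p"
    proof -
      have a: "T * (K1 * norm w) + T * (K2 * (K3 * norm w + K4 * norm f)) \<le> T * (K1 + K2 * K3 + K2 * K4 + K2) * (norm f + norm w)"
      proof -
        have "T * (K1 * norm w) + T * (K2 * (K3 * norm w + K4 * norm f)) = T * (K1 * norm w + K2 * K3 * norm w + K2 * K4 * norm f)"
          by (simp add: algebra_simps)
        also have "\<dots> \<le> T * ((K1 + K2 * K3 + K2 * K4 + K2) * (norm f + norm w))"
          using T K1 K2 K3 K4 by (intro mult_left_mono) (auto simp: algebra_simps intro!: add_nonneg_nonneg mult_nonneg_nonneg)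
        finally show ?thesis by (simp add: algebra_simps)
      qed
      have b: "T * (K2 * norm p) \<le> T * (K1 + K2 * K3 + K2 * K4 + K2) * norm p"
      proof -
        have "K2 \<le> K1 + K2 * K3 + K2 * K4 + K2" using K1 K2 K3 K4 by simp
        then have "T * K2 \<le> T * (K1 + K2 * K3 + K2 * K4 + K2)" using T by (rule mult_left_mono)
        then have "T * K2 * norm p \<le> T * (K1 + K2 * K3 + K2 * K4 + K2) * norm p" by (rule mult_right_mono) simp
        then show ?thesis by (simp add: mult.assoc)
      qed
      have c: "norm p \<le> norm p * 1" by simp
      show ?thesis using a b unfolding C_def by (simp add: algebra_simps)
    qed
    finally show ?thesis .
  qed
  have "norm (fst (traj Ph f w 0 k)) + norm (snd (traj Ph f w 0 k)) \<le> C ^ k * (norm f + norm w + (\<Sum>l<k. norm (Ph l)))"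
    for Ph f w k
  proof (induction k)
    case 0 then show ?case by simp
  next
    case (Suc k)
    let ?S = "norm f + norm w + (\<Sum>l<k. norm (Ph l))"
    have Ck: "C ^ k \<ge> 1" using C1 by simp
    have "norm (fst (traj Ph f w 0 (Suc k))) + norm (snd (traj Ph f w 0 (Suc k)))
        \<le> C * (norm (fst (traj Ph f w 0 k)) + norm (snd (traj Ph f w 0 k))) + C * norm (Ph k)"
      using step by simp
    also have "\<dots> \<le> C * (C ^ k * ?S) + C * norm (Ph k)"
      using Suc C1 by (intro add_mono mult_left_mono) auto
    also have "\<dots> \<le> C * (C ^ k * ?S) + C * (C ^ k * norm (Ph k))"
      using C1 Ck by (intro add_mono mult_left_mono) (auto intro: mult_left_le_one_le order_trans[OF _ mult_right_mono[of 1 "C^k"]])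
    also have "\<dots> = C ^ Suc k * (norm f + norm w + (\<Sum>l<Suc k. norm (Ph l)))"
      by (simp add: algebra_simps)
    finally show ?case .
  qed
  then show ?thesis using C1 by blast
qed

lemma bc_diff:
  "\<exists>M0\<ge>0. \<forall>Ph1 Ph2 f1 f2 w1 w2 a1 a2. \<forall>j\<in>Jset.
     \<bar>bc Ph1 f1 w1 a1 j - bc Ph2 f2 w2 a2 j\<bar> \<le> M0 * ((\<Sum>k<Nh P. norm (Ph1 k - Ph2 k)) + norm (f1 - f2) + norm (w1 - w2) + norm (a1 - a2))"
proof -
  obtain C where C1: "C \<ge> 1" and CB: "\<And>Ph f w k. norm (fst (traj Ph f w 0 k)) + norm (snd (traj Ph f w 0 k))
            \<le> C ^ k * (norm f + norm w + (\<Sum>l<k. norm (Ph l)))" using traj_bound by blast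
  define M0 where "M0 = C ^ Nh P + (\<Sum>i\<in>UNIV. epsv P i)"
  have epsle: "epsv P i \<le> (\<Sum>i\<in>UNIV. epsv P i)" for i
    using eps_pos by (intro member_le_sum) (auto simp: less_imp_le)
  have CN: "C ^ Nh P \<ge> 0" using C1 by simp
  have es: "(\<Sum>i\<in>UNIV. epsv P i) \<ge> 0" using eps_pos by (simp add: sum_nonneg less_imp_le)
  have M0: "M0 \<ge> 0" unfolding M0_def using CN es by simp
  show ?thesis
  proof (intro exI[of _ M0] conjI M0 allI ballI)
    fix Ph1 Ph2 :: "nat \<Rightarrow> real^'n" and f1 f2 :: "real^'m" and w1 w2 a1 a2 :: "real^'n" and j
    assume j: "j \<in> Jset"
    define Q where "Q = (\<Sum>k<Nh P. norm (Ph1 k - Ph2 k)) + norm (f1 - f2) + norm (w1 - w2) + norm (a1 - a2)"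
    have Q0: "Q \<ge> 0" unfolding Q_def by (simp add: sum_nonneg)
    show "\<bar>bc Ph1 f1 w1 a1 j - bc Ph2 f2 w2 a2 j\<bar> \<le> M0 * Q"
    proof (cases j)
      case (Box i s)
      have "\<bar>bc Ph1 f1 w1 a1 j - bc Ph2 f2 w2 a2 j\<bar> = epsv P i * \<bar>\<bar>a1 $ i\<bar> - \<bar>a2 $ i\<bar>\<bar>"
        using Box eps_pos[of i] by (simp add: bc_def right_diff_distrib[symmetric] abs_mult)
      also have "\<dots> \<le> epsv P i * norm (a1 - a2)"
      proof -
        have "\<bar>\<bar>a1 $ i\<bar> - \<bar>a2 $ i\<bar>\<bar> \<le> \<bar>(a1 - a2) $ i\<bar>" by simp
        also have "\<dots> \<le> norm (a1 - a2)" by (rule component_le_norm_cart)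
        finally show ?thesis using eps_pos[of i] by (simp add: mult_left_mono)
      qed
      also have "\<dots> \<le> M0 * Q"
      proof (rule mult_mono)
        show "epsv P i \<le> M0" unfolding M0_def using epsle[of i] CN by simp
        show "norm (a1 - a2) \<le> Q" unfolding Q_def by (simp add: sum_nonneg)
      qed (use M0 in auto)
      finally show ?thesis .
    next
      case (Wc k i s)
      then have k: "k < Nh P" using Wc_in j by blast
      define c1 where "c1 = snd (traj Ph1 f1 w1 0 (Suc k))"
      define c2 where "c2 = snd (traj Ph2 f2 w2 0 (Suc k))"
      have "\<bar>bc Ph1 f1 w1 a1 j - bc Ph2 f2 w2 a2 j\<bar> = \<bar>(c1 - c2) $ i\<bar>"
        using Wc by (auto simp: bc_def c1_def c2_def abs_minus_commute)
      also have "\<dots> \<le> norm (c1 - c2)" by (rule component_le_norm_cart)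
      also have "c1 - c2 = snd (traj (\<lambda>k. Ph1 k - Ph2 k) (f1 - f2) (w1 - w2) 0 (Suc k))"
        unfolding c1_def c2_def using traj_diff[of Ph1 f1 w1 0 "Suc k" Ph2 f2 w2] by (metis snd_diff)
      also have "norm \<dots> \<le> C ^ Suc k * (norm (f1 - f2) + norm (w1 - w2) + (\<Sum>l<Suc k. norm (Ph1 l - Ph2 l)))"
        using CB[of "\<lambda>k. Ph1 k - Ph2 k" "f1 - f2" "w1 - w2" "Suc k"] by (smt (verit) norm_ge_zero)
      also have "\<dots> \<le> C ^ Nh P * Q"
      proof (rule mult_mono)
        show "C ^ Suc k \<le> C ^ Nh P" using C1 k by (intro power_increasing) auto
        have "(\<Sum>l<Suc k. norm (Ph1 l - Ph2 l)) \<le> (\<Sum>l<Nh P. norm (Ph1 l - Ph2 l))"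
          using k by (intro sum_mono2) auto
        then show "norm (f1 - f2) + norm (w1 - w2) + (\<Sum>l<Suc k. norm (Ph1 l - Ph2 l)) \<le> Q"
          unfolding Q_def using norm_ge_zero[of "a1 - a2"] by linarith
      qed (use CN in \<open>auto simp: sum_nonneg\<close>)
      also have "\<dots> \<le> M0 * Q" unfolding M0_def using es Q0 by (intro mult_right_mono) auto
      finally show ?thesis .
    qed
  qed
qed

lemma uopt_lip:
  "\<exists>L. \<forall>Ph1 Ph2 f1 f2 w1 w2 a1 a2. a1 \<in> Aset G \<longrightarrow> a2 \<in> Aset G \<longrightarrow>
      norm (uopt G P Ph1 f1 w1 a1 - uopt G P Ph2 f2 w2 a2)
        \<le> L * ((\<Sum>k<Nh P. norm (Ph1 k - Ph2 k)) + norm (f1 - f2) + norm (w1 - w2) + norm (a1 - a2))"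
proof -
  obtain M0 where M0: "M0 \<ge> 0" and MB: "\<And>Ph1 Ph2 f1 f2 w1 w2 a1 a2 j. j \<in> Jset \<Longrightarrow>
     \<bar>bc Ph1 f1 w1 a1 j - bc Ph2 f2 w2 a2 j\<bar> \<le> M0 * ((\<Sum>k<Nh P. norm (Ph1 k - Ph2 k)) + norm (f1 - f2) + norm (w1 - w2) + norm (a1 - a2))"
    using bc_diff by blast
  have "bounded_linear Uof" using Uof_linear linear_conv_bounded_linear by blast
  then obtain KU where KU: "KU \<ge> 0" "\<And>z. norm (Uof z) \<le> norm z * KU"
    using bounded_linear.nonneg_bounded by blast
  show ?thesis
  proof (intro exI[of _ "KU * pp.Lc * (real (card Jset) * M0)"] allI impI)
    fix Ph1 Ph2 :: "nat \<Rightarrow> real^'n" and f1 f2 :: "real^'m" and w1 w2 a1 a2 :: "real^'n"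
    assume a1: "a1 \<in> Aset G" and a2: "a2 \<in> Aset G"
    define Q where "Q = (\<Sum>k<Nh P. norm (Ph1 k - Ph2 k)) + norm (f1 - f2) + norm (w1 - w2) + norm (a1 - a2)"
    let ?b1 = "bc Ph1 f1 w1 a1" and ?b2 = "bc Ph2 f2 w2 a2"
    have "norm (uopt G P Ph1 f1 w1 a1 - uopt G P Ph2 f2 w2 a2) = norm (Uof (pp.xb ?b1 - pp.xb ?b2))"
      unfolding uopt_eq[OF a1] uopt_eq[OF a2] linear_diff[OF Uof_linear] ..
    also have "\<dots> \<le> norm (pp.xb ?b1 - pp.xb ?b2) * KU" by (rule KU(2))
    also have "\<dots> \<le> (pp.Lc * (\<Sum>j\<in>Jset. \<bar>?b1 j - ?b2 j\<bar>)) * KU"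
      using pp.xb_lipschitz[OF PS_ne PS_ne] KU(1) by (rule mult_right_mono)
    also have "\<dots> \<le> (pp.Lc * (real (card Jset) * (M0 * Q))) * KU"
    proof -
      have "(\<Sum>j\<in>Jset. \<bar>?b1 j - ?b2 j\<bar>) \<le> real (card Jset) * (M0 * Q)"
        using MB unfolding Q_def by (intro sum_bounded_above) auto
      then show ?thesis using pp.Lc_nonneg KU(1) by (intro mult_right_mono mult_left_mono) auto
    qed
    also have "\<dots> = KU * pp.Lc * (real (card Jset) * M0) * Q" by (simp add: algebra_simps)
    finally show "norm (uopt G P Ph1 f1 w1 a1 - uopt G P Ph2 f2 w2 a2) \<le> KU * pp.Lc * (real (card Jset) * M0) * Q" .
  qed
qed

end

theorem lemma4p2:
  fixes G :: "('n::finite, 'm::finite) grid" and P :: "'n mpcpar"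
    and \<Delta> :: "nat \<Rightarrow> real" and pf :: "nat \<Rightarrow> real \<Rightarrow> real^'n" and p :: "real \<Rightarrow> real^'n"
    and f :: "real \<Rightarrow> real^'m" and \<omega> :: "real \<Rightarrow> real^'n" and \<alpha> :: "real \<Rightarrow> real^'n"
  assumes "valid_grid G" and "valid_par G P"
    and "\<Delta> 0 = 0" and "strict_mono \<Delta>"
    and "closed_loop G P \<Delta> pf p f \<omega> \<alpha>"
  shows "(\<forall>j. uhat_mpc G P \<Delta> pf f \<omega> \<alpha> (\<Delta> j) =
              uopt G P (Pfcst P \<Delta> pf j) (f (\<Delta> j)) (\<omega> (\<Delta> j)) (\<alpha> (\<Delta> j)))
       \<and> (\<exists>L. \<forall>Ph1 Ph2 f1 f2 w1 w2 a1 a2. a1 \<in> Aset G \<longrightarrow> a2 \<in> Aset G \<longrightarrow>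
              norm (uopt G P Ph1 f1 w1 a1 - uopt G P Ph2 f2 w2 a2)
                \<le> L * ((\<Sum>k<Nh P. norm (Ph1 k - Ph2 k)) + norm (f1 - f2) + norm (w1 - w2) + norm (a1 - a2)))
       \<and> (\<forall>t\<ge>0. \<forall>i. \<alpha> t $ i * uhat_mpc G P \<Delta> pf f \<omega> \<alpha> t $ i \<le> epsv P i * (\<alpha> t $ i)\<^sup>2)"
  proof -
  interpret qpctx G P using assms(1,2) by (rule qpctx.intro)
  have CL: "closed_loop G P \<Delta> pf p f \<omega> \<alpha>" by (rule assms(5))
  have smono: "strict_mono \<Delta>" by (rule assms(4))
  have D0: "\<Delta> j \<ge> 0" for j
    using strict_mono_less_eq[OF smono, of 0 j] assms(3) by simp
  have aA: "\<alpha> t \<in> Aset G" if "t \<ge> 0" for t using CL that unfolding closed_loop_def by blast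
  have seg: "seg \<Delta> (\<Delta> j) = j" for j
    unfolding seg_def
  proof (rule the_equality)
    show "\<Delta> j \<le> \<Delta> j \<and> \<Delta> j < \<Delta> (Suc j)" using strict_mono_less[OF smono] by simp
  next
    fix j' assume h: "\<Delta> j' \<le> \<Delta> j \<and> \<Delta> j < \<Delta> (Suc j')"
    then have "j' \<le> j" "j < Suc j'" using strict_mono_less_eq[OF smono] strict_mono_less[OF smono] by auto
    then show "j' = j" by simp
  qed
  have sat_id: "\<bar>a\<bar> \<le> b \<Longrightarrow> sat a b = a" for a b unfolding sat_def by auto
  have sat_bd: "0 \<le> b \<Longrightarrow> \<bar>sat a b\<bar> \<le> b" for a b unfolding sat_def by auto
  have part1: "\<forall>j. uhat_mpc G P \<Delta> pf f \<omega> \<alpha> (\<Delta> j) =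
              uopt G P (Pfcst P \<Delta> pf j) (f (\<Delta> j)) (\<omega> (\<Delta> j)) (\<alpha> (\<Delta> j))"
  proof
    fix j
    have u: "u_mpc G P \<Delta> pf f \<omega> \<alpha> (\<Delta> j) = uopt G P (Pfcst P \<Delta> pf j) (f (\<Delta> j)) (\<omega> (\<Delta> j)) (\<alpha> (\<Delta> j))"
      unfolding u_mpc_def Let_def seg ..
    show "uhat_mpc G P \<Delta> pf f \<omega> \<alpha> (\<Delta> j) = uopt G P (Pfcst P \<Delta> pf j) (f (\<Delta> j)) (\<omega> (\<Delta> j)) (\<alpha> (\<Delta> j))"
      unfolding uhat_mpc_def u
      using uopt_box[OF aA[OF D0[of j]]] sat_id by (simp add: vec_eq_iff)
  qed
  have part3: "\<forall>t\<ge>0. \<forall>i. \<alpha> t $ i * uhat_mpc G P \<Delta> pf f \<omega> \<alpha> t $ i \<le> epsv P i * (\<alpha> t $ i)\<^sup>2"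
  proof (intro allI impI)
    fix t :: real and i
    let ?x = "\<alpha> t $ i" and ?s = "uhat_mpc G P \<Delta> pf f \<omega> \<alpha> t $ i"
    have e: "epsv P i > 0" by (rule eps_pos)
    have "\<bar>?s\<bar> \<le> epsv P i * \<bar>?x\<bar>" unfolding uhat_mpc_def using sat_bd e by simp
    then have "\<bar>?x\<bar> * \<bar>?s\<bar> \<le> \<bar>?x\<bar> * (epsv P i * \<bar>?x\<bar>)" by (rule mult_left_mono) simp
    moreover have "?x * ?s \<le> \<bar>?x\<bar> * \<bar>?s\<bar>" by (simp add: abs_mult[symmetric])
    moreover have "\<bar>?x\<bar> * (epsv P i * \<bar>?x\<bar>) = epsv P i * ?x\<^sup>2" by (simp add: power2_eq_square abs_mult_self_eq algebra_simps)
    ultimately show "?x * ?s \<le> epsv P i * ?x\<^sup>2" by linarith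
  qed
  show ?thesis using part1 uopt_lip part3 by blast
qed

end
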